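(* Let $R$ be a localizable archimedean partially ordered commutative ring and $s\in\mathrm{Loc}(R)$. Then $\mathrm{O}_{s<\infty}=\operatorname{dom}\widehat s_{\max}$.
   Context: Rings are commutative with unit; ring morphisms are unital. A partially ordered commutative ring is a commutative ring $R$ with partial order $\le$, $r\le s\Rightarrow r+t\le s+t$, positive cone $R^+$ closed under multiplication and containing all squares. $\mathbb{N}=\{1,2,\dots\}$, $\mathbb{N}_0=\mathbb{N}\cup\{0\}$. Archimedean: $kg+h\in R^+$ for all $k\in\mathbb{N}$ implies $g\in R^+$. $\mathrm{Loc}(R)$: the $s\in1+R^+$ with $rs\in R^+\Rightarrow r\in R^+$ for all $r$; localizable: each $r$ satisfies $-s\le r\le s$ for some $s\in\mathrm{Loc}(R)$. $\mathscr{C}_{\mathrm{a.e.}}(X)$ for a topological space $X$: continuous real functions defined on dense open subsets of $X$, modulo agreement on a dense open subset of the common domain, with pointwise operations on the intersection of domains. Each $a\in\mathscr{C}_{\mathrm{a.e.}}(X)$ has a unique representative $a_{\max}$ whose domain contains the domain of every representative and which restricts to each representative. $R_{\mathrm{loc}}$: fractions $r/s$ ($r\in R$, $s\in\mathrm{Loc}(R)$), $r/s=r'/s'$ iff $rs'=r's$, ordered by $p/q\le r/s$ iff $ps\le rq$. $R^{\mathrm{bd}}_{\mathrm{loc}}=\{a:\exists n\in\mathbb{N}_0,\ -n\le a\le n\}$. $\mathcal{K}(R)$: ring morphisms $\varphi\colon R^{\mathrm{bd}}_{\mathrm{loc}}\to\mathbb{R}$ with $\varphi(a)\ge0$ for $a\ge0$,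 weak-$*$ topology. $\mathrm{O}_{s<\infty}=\{\varphi:\varphi(1/s)>0\}$; for archimedean localizable $R$ these are dense open in $\mathcal{K}(R)$. For $r\in R$, $\widehat r\in\mathscr{C}_{\mathrm{a.e.}}(\mathcal{K}(R))$ is the class of $r_t\colon\mathrm{O}_{t<\infty}\to\mathbb{R}$, $\varphi\mapsto\varphi(1/t)^{-1}\varphi(r/t)$, for any $t\in\mathrm{Loc}(R)$ with $r/t\in R^{\mathrm{bd}}_{\mathrm{loc}}$ (independent of $t$). *)

theory Defs
  imports "HOL-Analysis.Analysis"
begin

(* A partially ordered commutative ring is given by its positive cone P = R^+;
   the order is  r \<le> s  iff  s - r \<in> P. *)
definition po_cring :: "'a::comm_ring_1 set \<Rightarrow> bool" where
  "po_cring P \<longleftrightarrow>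
     (\<forall>a\<in>P. \<forall>b\<in>P. a + b \<in> P) \<and>
     (\<forall>a\<in>P. \<forall>b\<in>P. a * b \<in> P) \<and>
     (\<forall>a. a * a \<in> P) \<and>
     (\<forall>a. a \<in> P \<and> - a \<in> P \<longrightarrow> a = 0)"

definition archimedean_cone :: "'a::comm_ring_1 set \<Rightarrow> bool" where
  "archimedean_cone P \<longleftrightarrow>
     (\<forall>g h. (\<forall>k::nat. k \<ge> 1 \<longrightarrow> of_nat k * g + h \<in> P) \<longrightarrow> g \<in> P)"

definition Loc :: "'a::comm_ring_1 set \<Rightarrow> 'a set" where
  "Loc P = {s. s - 1 \<in> P \<and> (\<forall>r. r * s \<in> P \<longrightarrow> r \<in> P)}"

definition localizable :: "'a::comm_ring_1 set \<Rightarrow> bool" where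
  "localizable P \<longleftrightarrow> (\<forall>r. \<exists>s\<in>Loc P. r + s \<in> P \<and> s - r \<in> P)"

(* Fractions r/s are represented by pairs (r,s) with s \<in> Loc P *)
definition frac_eq :: "'a::comm_ring_1 \<times> 'a \<Rightarrow> 'a \<times> 'a \<Rightarrow> bool" where
  "frac_eq x y \<longleftrightarrow> fst x * snd y = fst y * snd x"

definition frac_le :: "'a::comm_ring_1 set \<Rightarrow> 'a \<times> 'a \<Rightarrow> 'a \<times> 'a \<Rightarrow> bool" where
  "frac_le P x y \<longleftrightarrow> fst y * snd x - fst x * snd y \<in> P"

definition frac_add :: "'a::comm_ring_1 \<times> 'a \<Rightarrow> 'a \<times> 'a \<Rightarrow> 'a \<times> 'a" where
  "frac_add x y = (fst x * snd y + fst y * snd x, snd x * snd y)"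

definition frac_mult :: "'a::comm_ring_1 \<times> 'a \<Rightarrow> 'a \<times> 'a \<Rightarrow> 'a \<times> 'a" where
  "frac_mult x y = (fst x * fst y, snd x * snd y)"

definition bdloc :: "'a::comm_ring_1 set \<Rightarrow> ('a \<times> 'a) set" where
  "bdloc P = {x. snd x \<in> Loc P \<and>
      (\<exists>n::nat. frac_le P (- of_nat n, 1) x \<and> frac_le P x (of_nat n, 1))}"

(* K(R): positive unital ring morphisms R_loc^bd \<rightarrow> \<real>, represented as functions on
   representing pairs, compatible with equality of fractions, and normalised to 0
   outside R_loc^bd. *)
definition Kchar :: "'a::comm_ring_1 set \<Rightarrow> ('a \<times> 'a \<Rightarrow> real) set" where
  "Kchar P = {\<phi>.
     (\<forall>x\<in>bdloc P. \<forall>y\<in>bdloc P. frac_eq x y \<longrightarrow> \<phi> x = \<phi> y) \<and>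
     \<phi> (1, 1) = 1 \<and>
     (\<forall>x\<in>bdloc P. \<forall>y\<in>bdloc P. \<phi> (frac_add x y) = \<phi> x + \<phi> y) \<and>
     (\<forall>x\<in>bdloc P. \<forall>y\<in>bdloc P. \<phi> (frac_mult x y) = \<phi> x * \<phi> y) \<and>
     (\<forall>x\<in>bdloc P. frac_le P (0, 1) x \<longrightarrow> \<phi> x \<ge> 0) \<and>
     (\<forall>x. x \<notin> bdloc P \<longrightarrow> \<phi> x = 0)}"

(* weak-* topology = topology of pointwise convergence *)
definition Ktop :: "'a::comm_ring_1 set \<Rightarrow> ('a \<times> 'a \<Rightarrow> real) topology" where
  "Ktop P = subtopology (powertop_real UNIV) (Kchar P)"

definition Oinf :: "'a::comm_ring_1 set \<Rightarrow> 'a \<Rightarrow> ('a \<times> 'a \<Rightarrow> real) set" where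
  "Oinf P s = {\<phi> \<in> Kchar P. \<phi> (1, s) > 0}"

definition rt :: "'a::comm_ring_1 \<Rightarrow> 'a \<Rightarrow> ('a \<times> 'a \<Rightarrow> real) \<Rightarrow> real" where
  "rt r t \<phi> = inverse (\<phi> (1, t)) * \<phi> (r, t)"

(* C_ae(X): representatives are pairs (U,f), U dense open, f continuous on U *)
definition ae_rep :: "'b topology \<Rightarrow> 'b set \<times> ('b \<Rightarrow> real) \<Rightarrow> bool" where
  "ae_rep X a \<longleftrightarrow> openin X (fst a) \<and> X closure_of (fst a) = topspace X \<and>
     continuous_map (subtopology X (fst a)) euclideanreal (snd a)"

definition ae_eq :: "'b topology \<Rightarrow> 'b set \<times> ('b \<Rightarrow> real) \<Rightarrow> 'b set \<times> ('b \<Rightarrow> real) \<Rightarrow> bool" where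
  "ae_eq X a b \<longleftrightarrow> (\<exists>W. openin X W \<and> W \<subseteq> fst a \<inter> fst b \<and>
     (subtopology X (fst a \<inter> fst b)) closure_of W = fst a \<inter> fst b \<and>
     (\<forall>x\<in>W. snd a x = snd b x))"

definition ae_max_dom :: "'b topology \<Rightarrow> 'b set \<times> ('b \<Rightarrow> real) \<Rightarrow> 'b set" where
  "ae_max_dom X a = (THE U. \<exists>f. ae_rep X (U, f) \<and> ae_eq X (U, f) a \<and>
     (\<forall>V g. ae_rep X (V, g) \<and> ae_eq X (V, g) a \<longrightarrow> V \<subseteq> U \<and> (\<forall>x\<in>V. f x = g x)))"

(* a representative of \<widehat>r: r_t on O_{t<\<infinity>} for some t \<in> Loc with r/t bounded *)
definition hat_rep :: "'a::comm_ring_1 set \<Rightarrow> 'a \<Rightarrow> ('a \<times> 'a \<Rightarrow> real) set \<times> (('a \<times> 'a \<Rightarrow> real) \<Rightarrow> real)" where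
  "hat_rep P r = (let t = (SOME t. t \<in> Loc P \<and> (r, t) \<in> bdloc P) in (Oinf P t, rt r t))"

end

theory Submission
  imports Defs
begin

definition nzd :: "'a::comm_ring_1 \<Rightarrow> bool" where
  "nzd s \<longleftrightarrow> (\<forall>x. x * s = 0 \<longrightarrow> x = 0)"

lemma nzd_1 [simp]: "nzd 1" by (simp add: nzd_def)

lemma nzd_mult: "nzd a \<Longrightarrow> nzd b \<Longrightarrow> nzd (a * b)"
  unfolding nzd_def by (metis mult.assoc)

definition frel :: "'a::comm_ring_1 \<times> 'a \<Rightarrow> 'a \<times> 'a \<Rightarrow> bool" where
  "frel x y \<longleftrightarrow> nzd (snd x) \<and> nzd (snd y) \<and> fst x * snd y = fst y * snd x"

lemma frel_iff [simp]:
  "frel x y \<longleftrightarrow> nzd (snd x) \<and> nzd (snd y) \<and> fst x * snd y = fst y * snd x"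
  by (simp add: frel_def)

lemma nzd_cancel: "nzd c \<Longrightarrow> a * c = b * c \<Longrightarrow> a = b"
  unfolding nzd_def by (metis eq_iff_diff_eq_0 left_diff_distrib)

lemma part_equivp_frel: "part_equivp (frel :: 'a::comm_ring_1 \<times> 'a \<Rightarrow> _)"
proof (rule part_equivpI)
  show "\<exists>x::'a\<times>'a. frel x x" by (rule exI[of _ "(0,1)"]) simp
  show "symp (frel :: 'a\<times>'a \<Rightarrow> _)" by (simp add: symp_def)
  show "transp (frel :: 'a\<times>'a \<Rightarrow> _)"
  proof (rule transpI, unfold split_paired_all)
    fix a b a' b' a'' b'' :: 'a
    assume A: "frel (a, b) (a', b')" and B: "frel (a', b') (a'', b'')"
    have "(a * b'') * b' = (a * b') * b''" by (simp add: ac_simps)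
    also have "\<dots> = (a' * b) * b''" using A by simp
    also have "\<dots> = (a' * b'') * b" by (simp add: ac_simps)
    also have "\<dots> = (a'' * b') * b" using B by simp
    also have "\<dots> = (a'' * b) * b'" by (simp add: ac_simps)
    finally have "a * b'' * b' = a'' * b * b'" .
    then have "a * b'' = a'' * b" using B nzd_cancel[of b' "a*b''" "a''*b"] by auto
    with A B show "frel (a, b) (a'', b'')" by auto
  qed
qed

quotient_type (overloaded) 'a fr = "'a :: comm_ring_1 \<times> 'a" / partial: "frel"
  by (rule part_equivp_frel)

lift_definition Fr :: "'a :: comm_ring_1 \<Rightarrow> 'a \<Rightarrow> 'a fr"
  is "\<lambda>a b. if nzd b then (a, b) else (0, 1)"
  by simp

lemma Fr_cases [cases type: fr]:
  obtains (Fr) a b where "q = Fr a b" "nzd b"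
  by transfer auto

lemma eq_fr:
  "nzd b \<Longrightarrow> nzd d \<Longrightarrow> Fr a b = Fr c d \<longleftrightarrow> a * d = c * b"
  by transfer simp

instantiation fr :: (comm_ring_1) comm_ring_1
begin

lift_definition zero_fr :: "'a fr" is "(0, 1)" by simp
lift_definition one_fr :: "'a fr" is "(1, 1)" by simp
lift_definition plus_fr :: "'a fr \<Rightarrow> 'a fr \<Rightarrow> 'a fr"
  is "\<lambda>q r. (fst q * snd r + fst r * snd q, snd q * snd r)"
proof (clarsimp simp: nzd_mult)
  fix a b c d a' b' c' d' :: 'a
  assume "a * b' = a' * b" "c * d' = c' * d"
  have "a * d * (b' * d') = (a * b') * (d * d')" "c * b * (b' * d') = (c * d') * (b * b')"
            "a' * d' * (b * d) = (a' * b) * (d * d')" "c' * b' * (b * d) = (c' * d) * (b * b')"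
    by (simp_all add: ac_simps)
  then show "(a * d + c * b) * (b' * d') = (a' * d' + c' * b') * (b * d)"
    using \<open>a * b' = a' * b\<close> \<open>c * d' = c' * d\<close> by (simp add: distrib_right)
qed
lift_definition uminus_fr :: "'a fr \<Rightarrow> 'a fr" is "\<lambda>x. (- fst x, snd x)" by simp
definition diff_fr_def: "q - r = q + - (r::'a fr)"
lift_definition times_fr :: "'a fr \<Rightarrow> 'a fr \<Rightarrow> 'a fr"
  is "\<lambda>q r. (fst q * fst r, snd q * snd r)"
proof (clarsimp simp: nzd_mult)
  fix a b c d a' b' c' d' :: 'a
  assume "a * b' = a' * b" "c * d' = c' * d"
  have "a * c * (b' * d') = (a * b') * (c * d')" "a' * c' * (b * d) = (a' * b) * (c' * d)"
    by (simp_all add: ac_simps)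
  then show "a * c * (b' * d') = a' * c' * (b * d)"
    using \<open>a * b' = a' * b\<close> \<open>c * d' = c' * d\<close> by simp
qed

lemma Zero_fr: "Fr 0 1 = 0" by transfer simp
lemma One_fr: "Fr 1 1 = 1" by transfer simp
lemma add_fr: "nzd b \<Longrightarrow> nzd d \<Longrightarrow> Fr a b + Fr c d = Fr (a * d + c * b) (b * d)"
  by transfer (simp add: nzd_mult)
lemma minus_fr: "- Fr a b = Fr (- a) b" by transfer simp
lemma mult_fr: "nzd b \<Longrightarrow> nzd d \<Longrightarrow> Fr a b * Fr c d = Fr (a * c) (b * d)"
  by transfer (simp add: nzd_mult)

instance
proof
  fix q r s :: "'a fr"
  show "(q * r) * s = q * (r * s)"
    by (cases q, cases r, cases s) (simp add: mult_fr nzd_mult mult.assoc)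
  show "q * r = r * q"
    by (cases q, cases r) (simp add: mult_fr mult.commute)
  show "1 * q = q"
    by transfer auto
  show "(q + r) + s = q + (r + s)"
    by (cases q, cases r, cases s) (simp add: add_fr nzd_mult algebra_simps)
  show "q + r = r + q"
    by (cases q, cases r) (simp add: add_fr ac_simps)
  show "0 + q = q"
    by transfer auto
  show "- q + q = 0"
    by transfer (auto simp: nzd_mult)
  show "q - r = q + - r"
    by (simp add: diff_fr_def)
  show "(q + r) * s = q * s + r * s"
  proof (cases q, cases r, cases s)
    fix a b c d e f assume *: "q = Fr a b" "nzd b" "r = Fr c d" "nzd d" "s = Fr e f" "nzd f"
    have "(q + r) * s = Fr ((a * d + c * b) * e) (b * d * f)" using * by (simp add: add_fr mult_fr nzd_mult)
    moreover have "q * s + r * s = Fr (a * e * (d * f) + c * e * (b * f)) (b * f * (d * f))"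
      using * by (simp add: add_fr mult_fr nzd_mult)
    moreover have "(a * d + c * b) * e * (b * f * (d * f)) = (a * e * (d * f) + c * e * (b * f)) * (b * d * f)"
      by (simp add: algebra_simps)
    ultimately show ?thesis using * by (simp add: eq_fr nzd_mult)
  qed
  show "(0::'a fr) \<noteq> 1"
    by transfer simp
qed

end

lemma diff_fr: "nzd b \<Longrightarrow> nzd d \<Longrightarrow> Fr a b - Fr c d = Fr (a * d - c * b) (b * d)"
  unfolding diff_conv_add_uminus minus_fr by (simp add: add_fr)

lemma of_nat_fr: "of_nat k = Fr (of_nat k) 1"
proof (induct k)
  case 0 show ?case by (simp add: Zero_fr)
next
  case (Suc k)
  have "of_nat (Suc k) = Fr 1 1 + (Fr (of_nat k) 1 :: 'a fr)" by (simp add: One_fr Suc[symmetric])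
  also have "\<dots> = Fr (of_nat (Suc k)) 1" by (simp add: add_fr)
  finally show ?case .
qed

lemma of_int_fr: "of_int k = Fr (of_int k) 1"
proof (cases "k \<ge> 0")
  case True then have "k = int (nat k)" by simp
  then obtain n where "k = int n" by blast
  then show ?thesis by (metis of_int_of_nat_eq of_nat_fr)
next
  case False then have "k = - int (nat (-k))" by simp
  then obtain n where "k = - int n" by blast
  then show ?thesis by (metis of_int_minus of_int_of_nat_eq of_nat_fr minus_fr)
qed


lemma rat_between:
  fixes a b :: real
  assumes "a < b"
  shows "\<exists>m::int. \<exists>n::nat. n > 0 \<and> a < of_int m / of_nat n \<and> of_int m / of_nat n < b"
proof -
  obtain r where r: "r \<in> \<rat>" "a < r" "r < b" using Rats_dense_in_real[OF assms] by blast
  then obtain m n where "r = of_int m / real n" "n \<noteq> 0" unfolding Rats_eq_int_div_nat by blast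
  with r show ?thesis by (intro exI[of _ m] exI[of _ n]) auto
qed

locale kd_setting =
  fixes A :: "'b::comm_ring_1 set" and T :: "'b set"
  assumes A_0: "0 \<in> A" and A_1: "1 \<in> A"
    and A_add: "x \<in> A \<Longrightarrow> y \<in> A \<Longrightarrow> x + y \<in> A"
    and A_mult: "x \<in> A \<Longrightarrow> y \<in> A \<Longrightarrow> x * y \<in> A"
    and A_uminus: "x \<in> A \<Longrightarrow> - x \<in> A"
    and T_A: "T \<subseteq> A"
    and T_add: "x \<in> T \<Longrightarrow> y \<in> T \<Longrightarrow> x + y \<in> T"
    and T_mult: "x \<in> T \<Longrightarrow> y \<in> T \<Longrightarrow> x * y \<in> T"
    and T_sq: "x \<in> A \<Longrightarrow> x * x \<in> T"
    and T_bnd: "x \<in> A \<Longrightarrow> \<exists>n::nat. of_nat n - x \<in> T \<and> of_nat n + x \<in> T"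
    and T_inv: "n > 0 \<Longrightarrow> \<exists>v\<in>T. of_nat n * v = 1"
    and T_neg1: "- 1 \<notin> T"
    and T_arch: "g \<in> A \<Longrightarrow> (\<forall>k::nat. k \<ge> 1 \<longrightarrow> of_nat k * g + 1 \<in> T) \<Longrightarrow> g \<in> T"
begin

lemma A_diff: "x \<in> A \<Longrightarrow> y \<in> A \<Longrightarrow> x - y \<in> A"
  using A_add A_uminus by (metis diff_conv_add_uminus)

lemma T_0: "0 \<in> T" using T_sq[OF A_0] by simp
lemma T_1: "1 \<in> T" using T_sq[OF A_1] by simp

lemma T_of_nat: "of_nat n \<in> T"
  by (induct n) (simp_all add: T_0 T_1 T_add)

lemma A_of_nat: "of_nat n \<in> A" using T_of_nat T_A by auto

lemma A_of_int: "of_int m \<in> A"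
  by (cases m rule: int_cases) (auto intro: A_uminus A_of_nat simp del: of_nat_Suc)

lemma T_of_int: "m \<ge> 0 \<Longrightarrow> of_int m \<in> T"
  by (metis T_of_nat nonneg_int_cases of_int_of_nat_eq)

definition H :: "('b \<Rightarrow> real) set" where
  "H = {\<Psi>. (\<forall>x\<in>A. \<forall>y\<in>A. \<Psi> (x + y) = \<Psi> x + \<Psi> y \<and> \<Psi> (x * y) = \<Psi> x * \<Psi> y) \<and>
          \<Psi> 1 = 1 \<and> (\<forall>t\<in>T. \<Psi> t \<ge> 0)}"

end

locale ord_setting = kd_setting A T for A :: "'b::comm_ring_1 set" and T +
  fixes Q :: "'b set"
  assumes T_Q: "T \<subseteq> Q" and Q_A: "Q \<subseteq> A"
    and Q_add: "x \<in> Q \<Longrightarrow> y \<in> Q \<Longrightarrow> x + y \<in> Q"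
    and Q_mult: "x \<in> Q \<Longrightarrow> y \<in> Q \<Longrightarrow> x * y \<in> Q"
    and Q_neg1: "- 1 \<notin> Q"
    and Q_tot: "x \<in> A \<Longrightarrow> x \<in> Q \<or> - x \<in> Q"
begin

lemma Q_int: "m \<ge> 0 \<Longrightarrow> of_int m \<in> Q" using T_of_int T_Q by auto

lemma Q_div: assumes "n > 0" "of_nat n * x \<in> Q" shows "x \<in> Q"
proof -
  obtain v where v: "v \<in> T" "of_nat n * v = 1" using T_inv[OF assms(1)] by blast
  have "v * (of_nat n * x) \<in> Q" using v T_Q assms(2) Q_mult by auto
  also have "v * (of_nat n * x) = x" using v(2) by (metis mult.assoc mult.commute mult_1)
  finally show ?thesis .
qed

lemma Q_neg_int: assumes "m < 0" shows "of_int m \<notin> Q"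
proof
  assume m: "of_int m \<in> Q"
  have "of_nat (nat (-m)) * (- 1) = (of_int m :: 'b)" using assms by simp
  with m have "of_nat (nat (-m)) * (- 1 :: 'b) \<in> Q" by simp
  then have "(- 1 :: 'b) \<in> Q" by (rule Q_div[rotated]) (use assms in simp)
  with Q_neg1 show False by simp
qed

lemma Q_int_iff: "of_int m \<in> Q \<longleftrightarrow> m \<ge> 0"
  using Q_int Q_neg_int by (meson not_le)

lemma Q_scale: "m \<ge> 0 \<Longrightarrow> x \<in> Q \<Longrightarrow> of_int m * x \<in> Q"
  using Q_int Q_mult by blast

lemma Q_scale_nat: "x \<in> Q \<Longrightarrow> of_nat m * x \<in> Q"
  using Q_scale[of "int m" x] by simp

definition Lc :: "'b \<Rightarrow> int \<Rightarrow> nat \<Rightarrow> bool" where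
  "Lc x m n \<longleftrightarrow> of_nat n * x - of_int m \<in> Q"

definition Uc :: "'b \<Rightarrow> int \<Rightarrow> nat \<Rightarrow> bool" where
  "Uc x m n \<longleftrightarrow> of_int m - of_nat n * x \<in> Q"

definition psi :: "'b \<Rightarrow> real" where
  "psi x = Sup {of_int m / of_nat n | m n. n > 0 \<and> Lc x m n}"

lemma LU:
  assumes "n > 0" "n' > 0" "Lc x m n" "Uc x m' n'"
  shows "of_int m / of_nat n \<le> (of_int m' / of_nat n' :: real)"
proof -
  have "of_nat n' * (of_nat n * x - of_int m) + of_nat n * (of_int m' - of_nat n' * x) \<in> Q"
    using assms Q_add Q_scale_nat unfolding Lc_def Uc_def by blast
  also have "of_nat n' * (of_nat n * x - of_int m) + of_nat n * (of_int m' - of_nat n' * x)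
      = (of_int (int n * m' - int n' * m) :: 'b)"
    by (simp add: algebra_simps)
  finally have "of_int (int n * m' - int n' * m) \<in> Q" .
  then have "int n * m' - int n' * m \<ge> 0" using Q_int_iff by blast
  then have "int n' * m \<le> int n * m'" by simp
  then have "real n' * of_int m \<le> real n * of_int m'"
    by (metis of_int_le_iff of_int_mult of_int_of_nat_eq)
  with assms(1,2) show ?thesis by (simp add: divide_simps mult.commute)
qed

lemma tot: "x \<in> A \<Longrightarrow> Lc x m n \<or> Uc x m n"
  unfolding Lc_def Uc_def
  using Q_tot[of "of_nat n * x - of_int m"] A_diff A_mult A_of_nat A_of_int by auto

lemma Lc_mono:
  assumes "n > 0" "n' > 0" "Lc x m n" "of_int m' / of_nat n' \<le> (of_int m / of_nat n :: real)"
  shows "Lc x m' n'"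
proof -
  have "real n * of_int m' \<le> real n' * of_int m" using assms by (simp add: divide_simps mult.commute)
  then have le: "int n * m' \<le> int n' * m" by (metis of_int_le_iff of_int_mult of_int_of_nat_eq)
  have "of_nat n' * (of_nat n * x - of_int m) + of_int (int n' * m - int n * m') \<in> Q"
    using assms(3) le unfolding Lc_def by (intro Q_add Q_scale_nat Q_int) auto
  also have "of_nat n' * (of_nat n * x - of_int m) + of_int (int n' * m - int n * m')
      = of_nat n * (of_nat n' * x - (of_int m' :: 'b))"
    by (simp add: algebra_simps)
  finally show ?thesis unfolding Lc_def using Q_div assms(1) by blast
qed

lemma Uc_mono:
  assumes "n > 0" "n' > 0" "Uc x m n" "of_int m / of_nat n \<le> (of_int m' / of_nat n' :: real)"
  shows "Uc x m' n'"
proof -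
  have "real n' * of_int m \<le> real n * of_int m'" using assms by (simp add: divide_simps mult.commute)
  then have le: "int n' * m \<le> int n * m'" by (metis of_int_le_iff of_int_mult of_int_of_nat_eq)
  have "of_nat n' * (of_int m - of_nat n * x) + of_int (int n * m' - int n' * m) \<in> Q"
    using assms(3) le unfolding Uc_def by (intro Q_add Q_scale_nat Q_int) auto
  also have "of_nat n' * (of_int m - of_nat n * x) + of_int (int n * m' - int n' * m)
      = of_nat n * (of_int m' - of_nat n' * (x :: 'b))"
    by (simp add: algebra_simps)
  finally show ?thesis unfolding Uc_def using Q_div assms(1) by blast
qed

lemma bnd_LU: assumes "x \<in> A" shows "\<exists>N::nat. Lc x (- int N) 1 \<and> Uc x (int N) 1"
proof -
  obtain N :: nat where "of_nat N - x \<in> T" "of_nat N + x \<in> T" using T_bnd[OF assms] by blast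
  then show ?thesis unfolding Lc_def Uc_def using T_Q by (intro exI[of _ N]) (auto simp: add.commute)
qed

lemma psi_set_ne: assumes "x \<in> A" shows "{of_int m / of_nat n | m n. n > 0 \<and> Lc x m n} \<noteq> ({} :: real set)"
proof -
  obtain N :: nat where "Lc x (- int N) 1" using bnd_LU[OF assms] by blast
  then have "of_int (- int N) / of_nat 1 \<in> {of_int m / of_nat n | m n. n > 0 \<and> Lc x m n}" by blast
  then show ?thesis by blast
qed

lemma psi_set_bdd: assumes "x \<in> A" shows "bdd_above ({of_int m / of_nat n | m n. n > 0 \<and> Lc x m n} :: real set)"
proof -
  obtain N :: nat where "Uc x (int N) 1" using bnd_LU[OF assms] by blast
  then have "z \<le> (of_int (int N) / of_nat 1 :: real)" if "z \<in> {of_int m / of_nat n | m n. n > 0 \<and> Lc x m n}" for z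
  proof -
    from that obtain m n where "z = of_int m / of_nat n" "n > 0" "Lc x m n" by blast
    then show ?thesis using LU[of n 1 x m "int N"] \<open>Uc x (int N) 1\<close> by simp
  qed
  then show ?thesis by (rule bdd_aboveI)
qed

lemma psi_ge: "x \<in> A \<Longrightarrow> n > 0 \<Longrightarrow> Lc x m n \<Longrightarrow> of_int m / of_nat n \<le> psi x"
  unfolding psi_def by (rule cSup_upper[OF _ psi_set_bdd]) auto

lemma psi_le: "x \<in> A \<Longrightarrow> n > 0 \<Longrightarrow> Uc x m n \<Longrightarrow> psi x \<le> of_int m / of_nat n"
  unfolding psi_def by (rule cSup_least[OF psi_set_ne]) (auto intro: LU)

lemma psi_L: assumes "x \<in> A" "n > 0" "of_int m / of_nat n < psi x" shows "Lc x m n"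
proof (rule ccontr)
  assume "\<not> Lc x m n"
  then have "Uc x m n" using tot[OF assms(1)] by blast
  then have "psi x \<le> of_int m / of_nat n" by (rule psi_le[OF assms(1,2)])
  with assms(3) show False by linarith
qed

lemma psi_U: assumes "x \<in> A" "n > 0" "psi x < of_int m / of_nat n" shows "Uc x m n"
proof (rule ccontr)
  assume "\<not> Uc x m n"
  then have "Lc x m n" using tot[OF assms(1)] by blast
  then have "of_int m / of_nat n \<le> psi x" by (rule psi_ge[OF assms(1,2)])
  with assms(3) show False by linarith
qed

lemma psi_char:
  assumes "x \<in> A"
    and L: "\<And>m n. n > 0 \<Longrightarrow> of_int m / of_nat n < \<alpha> \<Longrightarrow> Lc x m n"
    and U: "\<And>m n. n > 0 \<Longrightarrow> \<alpha> < of_int m / of_nat n \<Longrightarrow> Uc x m n"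
  shows "psi x = \<alpha>"
proof (rule ccontr)
  assume "psi x \<noteq> \<alpha>"
  then consider (1) "psi x < \<alpha>" | (2) "\<alpha> < psi x" by linarith
  then show False
  proof cases
    case 1
    from rat_between[OF 1] obtain m n where mn: "n > 0" "psi x < of_int m / of_nat n" "of_int m / of_nat n < \<alpha>"
      by auto
    then show False using psi_ge[OF assms(1) mn(1) L[OF mn(1,3)]] by linarith
  next
    case 2
    from rat_between[OF 2] obtain m n where mn: "n > 0" "\<alpha> < of_int m / of_nat n" "of_int m / of_nat n < psi x"
      by auto
    then show False using psi_le[OF assms(1) mn(1) U[OF mn(1,2)]] by linarith
  qed
qed

end


context ord_setting
begin

lemma psi_add: assumes x: "x \<in> A" and y: "y \<in> A" shows "psi (x + y) = psi x + psi y"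
proof (rule psi_char)
  show "x + y \<in> A" using x y A_add by blast
next
  fix m :: int and n :: nat assume n: "n > 0" and lt: "of_int m / of_nat n < psi x + psi y"
  have "of_int m / of_nat n - psi y < psi x" using lt by linarith
  from rat_between[OF this] obtain m1 n1 where h: "n1 > 0" "of_int m / of_nat n - psi y < of_int m1 / of_nat n1"
      "of_int m1 / of_nat n1 < psi x" by auto
  define m2 where "m2 = m * int n1 - m1 * int n"
  define n2 where "n2 = n * n1"
  have n2: "n2 > 0" using n h(1) by (simp add: n2_def)
  have eq: "of_int m2 / of_nat n2 = of_int m / of_nat n - (of_int m1 / of_nat n1 :: real)"
    using n h(1) by (simp add: m2_def n2_def field_simps)
  have L1: "Lc x m1 n1" by (rule psi_L[OF x h(1) h(3)])
  have L2: "Lc y m2 n2" by (rule psi_L[OF y n2]) (use eq h(2) in linarith)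
  have "of_nat n * (of_nat n1 * x - of_int m1) + (of_nat n2 * y - of_int m2) \<in> Q"
    using L1 L2 unfolding Lc_def by (intro Q_add Q_scale_nat)
  also have "of_nat n * (of_nat n1 * x - of_int m1) + (of_nat n2 * y - of_int m2)
       = of_nat n1 * (of_nat n * (x + y) - (of_int m :: 'b))"
    by (simp add: m2_def n2_def algebra_simps)
  finally show "Lc (x + y) m n" unfolding Lc_def using Q_div h(1) by blast
next
  fix m :: int and n :: nat assume n: "n > 0" and gt: "psi x + psi y < of_int m / of_nat n"
  have "psi x < of_int m / of_nat n - psi y" using gt by linarith
  from rat_between[OF this] obtain m1 n1 where h: "n1 > 0" "psi x < of_int m1 / of_nat n1"
      "of_int m1 / of_nat n1 < of_int m / of_nat n - psi y" by auto
  define m2 where "m2 = m * int n1 - m1 * int n"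
  define n2 where "n2 = n * n1"
  have n2: "n2 > 0" using n h(1) by (simp add: n2_def)
  have eq: "of_int m2 / of_nat n2 = of_int m / of_nat n - (of_int m1 / of_nat n1 :: real)"
    using n h(1) by (simp add: m2_def n2_def field_simps)
  have U1: "Uc x m1 n1" by (rule psi_U[OF x h(1) h(2)])
  have U2: "Uc y m2 n2" by (rule psi_U[OF y n2]) (use eq h(3) in linarith)
  have "of_nat n * (of_int m1 - of_nat n1 * x) + (of_int m2 - of_nat n2 * y) \<in> Q"
    using U1 U2 unfolding Uc_def by (intro Q_add Q_scale_nat)
  also have "of_nat n * (of_int m1 - of_nat n1 * x) + (of_int m2 - of_nat n2 * y)
       = of_nat n1 * (of_int m - of_nat n * (x + y :: 'b))"
    by (simp add: m2_def n2_def algebra_simps)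
  finally show "Uc (x + y) m n" unfolding Uc_def using Q_div h(1) by blast
qed

lemma psi_1: "psi 1 = 1"
proof (rule psi_char)
  show "1 \<in> A" by (rule A_1)
next
  fix m :: int and n :: nat assume n: "n > 0" and lt: "of_int m / of_nat n < (1::real)"
  then have "of_int m < (of_nat n :: real)" by (simp add: divide_less_eq)
  then have "int n - m \<ge> 0" by linarith
  then have "of_int (int n - m) \<in> Q" by (rule Q_int)
  then show "Lc 1 m n" unfolding Lc_def by simp
next
  fix m :: int and n :: nat assume n: "n > 0" and gt: "(1::real) < of_int m / of_nat n"
  then have "(of_nat n :: real) < of_int m" by (simp add: less_divide_eq)
  then have "m - int n \<ge> 0" by linarith
  then have "of_int (m - int n) \<in> Q" by (rule Q_int)
  then show "Uc 1 m n" unfolding Uc_def by simp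
qed

lemma psi_Q: assumes "t \<in> Q" shows "psi t \<ge> 0"
proof -
  have t: "t \<in> A" using assms Q_A by blast
  have "Lc t 0 1" using assms unfolding Lc_def by simp
  from psi_ge[OF t _ this] show ?thesis by simp
qed

lemma psi_nonpos: assumes "x \<in> A" "- x \<in> Q" shows "psi x \<le> 0"
proof -
  have "Uc x 0 1" using assms unfolding Uc_def by simp
  from psi_le[OF assms(1) _ this] show ?thesis by simp
qed

lemma psi_of_nat_mult: assumes "x \<in> A" shows "psi (of_nat c * x) = of_nat c * psi x"
proof (induct c)
  case 0
  have "psi (0 + 0) = psi 0 + psi 0" using psi_add A_0 by blast
  then show ?case by simp
next
  case (Suc c)
  have "of_nat c * x \<in> A" using A_mult A_of_nat assms by blast
  then have "psi (x + of_nat c * x) = psi x + psi (of_nat c * x)" using psi_add assms by blast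
  then show ?case using Suc by (simp add: algebra_simps)
qed

lemma psi_of_nat: "psi (of_nat c) = of_nat c"
  using psi_of_nat_mult[OF A_1, of c] psi_1 by simp

lemma in_Q_of_pos: assumes "x \<in> A" "psi x > 0" shows "x \<in> Q"
proof -
  have "Lc x 0 1" by (rule psi_L) (use assms in auto)
  then show ?thesis unfolding Lc_def by simp
qed

lemma psi_mult_pos:
  assumes x: "x \<in> A" and y: "y \<in> A" and px: "psi x > 0" and py: "psi y > 0"
  shows "psi (x * y) = psi x * psi y"
proof (rule psi_char)
  show xy: "x * y \<in> A" using A_mult x y by blast
  have xQ: "x \<in> Q" and yQ: "y \<in> Q" using in_Q_of_pos x y px py by auto
  have xyQ: "x * y \<in> Q" using Q_mult xQ yQ by blast
  fix m :: int and n :: nat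
  {
    assume n: "n > 0" and lt: "of_int m / of_nat n < psi x * psi y"
    show "Lc (x * y) m n"
    proof (cases "m \<le> 0")
      case True
      have "of_nat n * (x * y) + of_int (- m) \<in> Q" using True xyQ by (intro Q_add Q_scale_nat Q_int) auto
      then show ?thesis unfolding Lc_def by simp
    next
      case False
      define r where "r = (of_int m / of_nat n :: real)"
      have r0: "r > 0" using False n by (simp add: r_def)
      have "r < psi x * psi y" using lt r_def by simp
      then have "r / psi y < psi x" using py by (simp add: pos_divide_less_eq)
      from rat_between[OF this] obtain a b where ab: "b > 0" "r / psi y < of_int a / of_nat b"
        "of_int a / of_nat b < psi x" by auto
      define p where "p = (of_int a / of_nat b :: real)"
      have p0: "p > 0" using ab r0 py p_def by (smt (verit) divide_pos_pos)
      then have a0: "a \<ge> 0" using ab(1) by (simp add: p_def zero_less_divide_iff)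
      have "r / p < psi y" using ab(2) py p0 unfolding p_def[symmetric] by (simp add: field_simps)
      from rat_between[OF this] obtain c d where cd: "d > 0" "r / p < of_int c / of_nat d"
        "of_int c / of_nat d < psi y" by auto
      define q where "q = (of_int c / of_nat d :: real)"
      have q0: "q > 0" using cd r0 p0 q_def by (smt (verit) divide_pos_pos)
      then have c0: "c \<ge> 0" using cd(1) by (simp add: q_def zero_less_divide_iff)
      have rpq: "r < p * q" using cd(2) p0 unfolding q_def[symmetric] by (simp add: field_simps)
      have La: "Lc x a b" by (rule psi_L[OF x ab(1) ab(3)])
      have Lb: "Lc y c d" by (rule psi_L[OF y cd(1) cd(3)])
      have "(of_nat b * x - of_int a) * (of_nat d * y - of_int c) + of_int c * (of_nat b * x - of_int a)
            + of_int a * (of_nat d * y - of_int c) \<in> Q"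
        using La Lb a0 c0 unfolding Lc_def by (intro Q_add Q_mult Q_scale) auto
      also have "(of_nat b * x - of_int a) * (of_nat d * y - of_int c) + of_int c * (of_nat b * x - of_int a)
            + of_int a * (of_nat d * y - of_int c) = of_nat (b * d) * (x * y) - (of_int (a * c) :: 'b)"
        by (simp add: algebra_simps)
      finally have "Lc (x * y) (a * c) (b * d)" unfolding Lc_def .
      moreover have "of_int (a * c) / of_nat (b * d) = p * q" by (simp add: p_def q_def)
      ultimately show ?thesis using Lc_mono[of "b * d" n "x * y" "a * c" m] ab(1) cd(1) n rpq r_def
        by simp
    qed
  }
  {
    assume n: "n > 0" and gt: "psi x * psi y < of_int m / of_nat n"
    define r where "r = (of_int m / of_nat n :: real)"
    have r0: "r > 0" using gt px py r_def by (smt (verit) mult_pos_pos)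
    have "psi x * psi y < r" using gt r_def by simp
    then have "psi x < r / psi y" using py by (simp add: pos_less_divide_eq)
    from rat_between[OF this] obtain a b where ab: "b > 0" "psi x < of_int a / of_nat b"
      "of_int a / of_nat b < r / psi y" by auto
    define p where "p = (of_int a / of_nat b :: real)"
    have p0: "p > 0" using ab px p_def by linarith
    then have a0: "a \<ge> 0" using ab(1) by (simp add: p_def zero_less_divide_iff)
    have "psi y < r / p" using ab(3) py p0 unfolding p_def[symmetric] by (simp add: field_simps)
    from rat_between[OF this] obtain c d where cd: "d > 0" "psi y < of_int c / of_nat d"
      "of_int c / of_nat d < r / p" by auto
    define q where "q = (of_int c / of_nat d :: real)"
    have q0: "q > 0" using cd py q_def by linarith
    then have c0: "c \<ge> 0" using cd(1) by (simp add: q_def zero_less_divide_iff)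
    have rpq: "p * q < r" using cd(3) p0 unfolding q_def[symmetric] by (simp add: field_simps)
    have Ua: "Uc x a b" by (rule psi_U[OF x ab(1) ab(2)])
    have Ub: "Uc y c d" by (rule psi_U[OF y cd(1) cd(2)])
    have "of_int c * (of_int a - of_nat b * x) + (of_nat b * x) * (of_int c - of_nat d * y) \<in> Q"
      using Ua Ub a0 c0 xQ unfolding Uc_def by (intro Q_add Q_mult Q_scale Q_scale_nat) auto
    also have "of_int c * (of_int a - of_nat b * x) + (of_nat b * x) * (of_int c - of_nat d * y)
        = of_int (a * c) - of_nat (b * d) * (x * y :: 'b)"
      by (simp add: algebra_simps)
    finally have "Uc (x * y) (a * c) (b * d)" unfolding Uc_def .
    moreover have "of_int (a * c) / of_nat (b * d) = p * q" by (simp add: p_def q_def)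
    ultimately show "Uc (x * y) m n" using Uc_mono[of "b * d" n "x * y" "a * c" m] ab(1) cd(1) n rpq r_def
      by simp
  }
qed

end


context ord_setting
begin

lemma psi_mult: assumes x: "x \<in> A" and y: "y \<in> A" shows "psi (x * y) = psi x * psi y"
proof -
  obtain N :: nat where N: "Lc x (- int N) 1" using bnd_LU[OF x] by blast
  obtain M :: nat where M: "Lc y (- int M) 1" using bnd_LU[OF y] by blast
  have pxN: "- real N \<le> psi x" using psi_ge[OF x _ N] by simp
  have pyM: "- real M \<le> psi y" using psi_ge[OF y _ M] by simp
  define c where "c = N + M + 1"
  have cA: "(of_nat c :: 'b) \<in> A" by (rule A_of_nat)
  have xc: "psi (x + of_nat c) = psi x + real c" using psi_add[OF x cA] psi_of_nat by simp
  have yc: "psi (y + of_nat c) = psi y + real c" using psi_add[OF y cA] psi_of_nat by simp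
  have xcA: "x + of_nat c \<in> A" and ycA: "y + of_nat c \<in> A" using A_add x y cA by auto
  have "psi ((x + of_nat c) * (y + of_nat c)) = psi (x + of_nat c) * psi (y + of_nat c)"
    by (rule psi_mult_pos[OF xcA ycA]) (use xc yc pxN pyM c_def in auto)
  also have "(x + of_nat c) * (y + of_nat c) = x * y + (of_nat c * x + (of_nat c * y + of_nat (c * c)))"
    by (simp add: algebra_simps)
  finally have eq: "psi (x * y + (of_nat c * x + (of_nat c * y + of_nat (c * c))))
      = psi (x + of_nat c) * psi (y + of_nat c)" .
  have A1: "x * y \<in> A" "of_nat c * x \<in> A" "of_nat c * y \<in> A" "(of_nat (c * c) :: 'b) \<in> A"
    using A_mult x y cA A_of_nat by auto
  have s1: "psi (of_nat c * y + of_nat (c * c)) = real c * psi y + real (c * c)"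
    using psi_add[OF A1(3) A1(4)] psi_of_nat_mult[OF y, of c] psi_of_nat[of "c * c"] by simp
  have s2: "psi (of_nat c * x + (of_nat c * y + of_nat (c * c))) = real c * psi x + (real c * psi y + real (c * c))"
    using psi_add[OF A1(2) A_add[OF A1(3) A1(4)]] psi_of_nat_mult[OF x, of c] s1 by simp
  have "psi (x * y + (of_nat c * x + (of_nat c * y + of_nat (c * c))))
      = psi (x * y) + (real c * psi x + (real c * psi y + real (c * c)))"
    using psi_add[OF A1(1) A_add[OF A1(2) A_add[OF A1(3) A1(4)]]] s2 by simp
  with eq xc yc show ?thesis by (simp add: algebra_simps)
qed

lemma psi_H: "psi \<in> H"
  unfolding H_def using psi_add psi_mult psi_1 psi_Q T_Q by auto

end

context kd_setting
begin

lemma H_add: "\<Psi> \<in> H \<Longrightarrow> x \<in> A \<Longrightarrow> y \<in> A \<Longrightarrow> \<Psi> (x + y) = \<Psi> x + \<Psi> y"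
  unfolding H_def by blast
lemma H_mult: "\<Psi> \<in> H \<Longrightarrow> x \<in> A \<Longrightarrow> y \<in> A \<Longrightarrow> \<Psi> (x * y) = \<Psi> x * \<Psi> y"
  unfolding H_def by blast
lemma H_1: "\<Psi> \<in> H \<Longrightarrow> \<Psi> 1 = 1"
  unfolding H_def by blast
lemma H_T: "\<Psi> \<in> H \<Longrightarrow> t \<in> T \<Longrightarrow> \<Psi> t \<ge> 0"
  unfolding H_def by blast
lemma H_0: "\<Psi> \<in> H \<Longrightarrow> \<Psi> 0 = 0"
  using H_add[of \<Psi> 0 0] A_0 by simp
lemma H_uminus: "\<Psi> \<in> H \<Longrightarrow> x \<in> A \<Longrightarrow> \<Psi> (- x) = - \<Psi> x"
  using H_add[of \<Psi> x "- x"] A_uminus H_0 by fastforce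
lemma H_diff: "\<Psi> \<in> H \<Longrightarrow> x \<in> A \<Longrightarrow> y \<in> A \<Longrightarrow> \<Psi> (x - y) = \<Psi> x - \<Psi> y"
  using H_add[of \<Psi> x "- y"] H_uminus[of \<Psi> y] A_uminus by (simp add: diff_conv_add_uminus del: add_uminus_conv_diff)
lemma H_of_nat: "\<Psi> \<in> H \<Longrightarrow> \<Psi> (of_nat n) = of_nat n"
proof (induct n)
  case 0 then show ?case using H_0 by simp
next
  case (Suc n)
  have "\<Psi> (1 + of_nat n) = \<Psi> 1 + \<Psi> (of_nat n)" using H_add[OF Suc(2) A_1 A_of_nat] .
  then show ?case using Suc H_1 by simp
qed
lemma H_of_int: "\<Psi> \<in> H \<Longrightarrow> \<Psi> (of_int m) = of_int m"
proof (cases "m \<ge> 0")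
  case True
  assume "\<Psi> \<in> H"
  then show ?thesis using True H_of_nat[of \<Psi> "nat m"] by simp
next
  case False
  assume H: "\<Psi> \<in> H"
  have "\<Psi> (- of_nat (nat (- m))) = - \<Psi> (of_nat (nat (- m)))" using H_uminus[OF H A_of_nat] .
  then show ?thesis using False H_of_nat[OF H, of "nat (- m)"] by simp
qed
lemma H_inv: assumes "\<Psi> \<in> H" "v \<in> A" "of_nat n * v = 1" shows "\<Psi> v = 1 / of_nat n"
proof -
  have "\<Psi> (of_nat n * v) = of_nat n * \<Psi> v" using H_mult[OF assms(1) A_of_nat assms(2)] H_of_nat[OF assms(1)] by simp
  moreover have "\<Psi> (of_nat n * v) = 1" using assms(3) H_1[OF assms(1)] by simp
  ultimately have "of_nat n * \<Psi> v = 1" by simp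
  then show ?thesis by (metis mult.commute nonzero_eq_divide_eq mult_zero_left zero_neq_one)
qed

lemma T_divide: assumes "n > 0" "of_nat n * x \<in> T" shows "x \<in> T"
proof -
  obtain v where v: "v \<in> T" "of_nat n * v = 1" using T_inv[OF assms(1)] by blast
  have "v * (of_nat n * x) \<in> T" using v assms(2) T_mult by auto
  also have "v * (of_nat n * x) = x" using v(2) by (metis mult.assoc mult.commute mult_1)
  finally show ?thesis .
qed

definition cones :: "'b \<Rightarrow> 'b set set" where
  "cones g = {Q. T \<subseteq> Q \<and> Q \<subseteq> A \<and> (\<forall>x\<in>Q. \<forall>y\<in>Q. x + y \<in> Q) \<and> (\<forall>x\<in>Q. \<forall>y\<in>Q. x * y \<in> Q)
      \<and> - 1 \<notin> Q \<and> g \<in> Q}"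

definition ext :: "'b set \<Rightarrow> 'b \<Rightarrow> 'b set" where
  "ext Q a = {q1 + a * q2 | q1 q2. q1 \<in> Q \<and> q2 \<in> Q}"

lemma ext_props:
  assumes TQ: "T \<subseteq> Q" and QA: "Q \<subseteq> A" and add: "\<forall>x\<in>Q. \<forall>y\<in>Q. x + y \<in> Q"
    and mult: "\<forall>x\<in>Q. \<forall>y\<in>Q. x * y \<in> Q" and a: "a \<in> A"
  shows "Q \<subseteq> ext Q a" "ext Q a \<subseteq> A" "a \<in> ext Q a"
    "\<forall>x\<in>ext Q a. \<forall>y\<in>ext Q a. x + y \<in> ext Q a" "\<forall>x\<in>ext Q a. \<forall>y\<in>ext Q a. x * y \<in> ext Q a"
proof -
  have Q0: "0 \<in> Q" and Q1: "1 \<in> Q" using TQ T_0 T_1 by auto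
  show "Q \<subseteq> ext Q a"
  proof
    fix x assume "x \<in> Q"
    then have "x = x + a * 0 \<and> x \<in> Q \<and> 0 \<in> Q" using Q0 by simp
    then show "x \<in> ext Q a" unfolding ext_def by blast
  qed
  show "ext Q a \<subseteq> A" unfolding ext_def using QA a A_add A_mult by blast
  have "a = 0 + a * 1" by simp
  then show "a \<in> ext Q a" unfolding ext_def using Q0 Q1 by blast
  show "\<forall>x\<in>ext Q a. \<forall>y\<in>ext Q a. x + y \<in> ext Q a"
  proof (intro ballI)
    fix x y assume "x \<in> ext Q a" "y \<in> ext Q a"
    then obtain q1 q2 q3 q4 where q: "x = q1 + a * q2" "y = q3 + a * q4" "q1 \<in> Q" "q2 \<in> Q" "q3 \<in> Q" "q4 \<in> Q"
      unfolding ext_def by blast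
    have "x + y = (q1 + q3) + a * (q2 + q4)" using q by (simp add: algebra_simps)
    moreover have "q1 + q3 \<in> Q" "q2 + q4 \<in> Q" using add q by auto
    ultimately show "x + y \<in> ext Q a" unfolding ext_def by blast
  qed
  show "\<forall>x\<in>ext Q a. \<forall>y\<in>ext Q a. x * y \<in> ext Q a"
  proof (intro ballI)
    fix x y assume "x \<in> ext Q a" "y \<in> ext Q a"
    then obtain q1 q2 q3 q4 where q: "x = q1 + a * q2" "y = q3 + a * q4" "q1 \<in> Q" "q2 \<in> Q" "q3 \<in> Q" "q4 \<in> Q"
      unfolding ext_def by blast
    have "x * y = (q1 * q3 + (a * a) * (q2 * q4)) + a * (q1 * q4 + q2 * q3)" using q by (simp add: algebra_simps)
    moreover have "a * a \<in> Q" using T_sq[OF a] TQ by auto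
    then have "q1 * q3 + (a * a) * (q2 * q4) \<in> Q" "q1 * q4 + q2 * q3 \<in> Q" using add mult q by auto
    ultimately show "x * y \<in> ext Q a" unfolding ext_def by blast
  qed
qed

lemma maximal_total:
  assumes Q: "Q \<in> cones g" and max: "\<forall>X\<in>cones g. Q \<subseteq> X \<longrightarrow> X = Q" and a: "a \<in> A"
  shows "a \<in> Q \<or> - a \<in> Q"
proof (rule ccontr)
  assume na: "\<not> (a \<in> Q \<or> - a \<in> Q)"
  have TQ: "T \<subseteq> Q" and QA: "Q \<subseteq> A" and add: "\<forall>x\<in>Q. \<forall>y\<in>Q. x + y \<in> Q"
    and mult: "\<forall>x\<in>Q. \<forall>y\<in>Q. x * y \<in> Q" and n1: "- 1 \<notin> Q" and g: "g \<in> Q"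
    using Q unfolding cones_def by auto
  have key: "- 1 \<in> ext Q b" if b: "b \<in> A" "b \<notin> Q" for b
  proof (rule ccontr)
    assume "- 1 \<notin> ext Q b"
    then have "ext Q b \<in> cones g" using ext_props[OF TQ QA add mult b(1)] TQ g unfolding cones_def by blast
    moreover have "Q \<subseteq> ext Q b" using ext_props[OF TQ QA add mult b(1)] by blast
    ultimately have "ext Q b = Q" using max by blast
    then show False using ext_props[OF TQ QA add mult b(1)] b(2) by blast
  qed
  obtain q1 q2 where h1: "- 1 = q1 + a * q2" "q1 \<in> Q" "q2 \<in> Q"
    using key[of a] a na unfolding ext_def by blast
  obtain q3 q4 where h2: "- 1 = q3 + (- a) * q4" "q3 \<in> Q" "q4 \<in> Q"
    using key[of "- a"] a na A_uminus unfolding ext_def by blast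
  have "- 1 = q1 + q3 + q1 * q3 + (a * a) * (q2 * q4)"
  proof -
    have e1: "q1 = - 1 - a * q2" using h1(1) by (metis add_diff_cancel_right')
    have e2: "q3 = - 1 - (- a) * q4" using h2(1) by (metis add_diff_cancel_right')
    show ?thesis unfolding e1 e2 by (simp add: algebra_simps)
  qed
  moreover have "a * a \<in> Q" using T_sq[OF a] TQ by auto
  then have "q1 + q3 + q1 * q3 + (a * a) * (q2 * q4) \<in> Q" using add mult h1 h2 by auto
  ultimately show False using n1 by simp
qed

lemma cones_chain:
  assumes "\<C> \<noteq> {}" "subset.chain (cones g) \<C>"
  shows "\<Union>\<C> \<in> cones g"
proof -
  have sub: "\<C> \<subseteq> cones g" and ch: "\<forall>X\<in>\<C>. \<forall>Y\<in>\<C>. X \<subseteq> Y \<or> Y \<subseteq> X"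
    using assms(2) unfolding subset.chain_def by blast+
  obtain X0 where X0: "X0 \<in> \<C>" using assms(1) by blast
  have two: "\<exists>Z\<in>\<C>. x \<in> Z \<and> y \<in> Z" if xy: "x \<in> \<Union>\<C>" "y \<in> \<Union>\<C>" for x y
  proof -
    obtain X Y where "X \<in> \<C>" "Y \<in> \<C>" "x \<in> X" "y \<in> Y" using xy by blast
    then show ?thesis using ch by blast
  qed
  show ?thesis unfolding cones_def
  proof (intro CollectI conjI ballI)
    show "T \<subseteq> \<Union>\<C>" using X0 sub unfolding cones_def by blast
    show "\<Union>\<C> \<subseteq> A" using sub unfolding cones_def by blast
    show "- 1 \<notin> \<Union>\<C>" using sub unfolding cones_def by blast
    show "g \<in> \<Union>\<C>" using X0 sub unfolding cones_def by blast
    fix x y assume "x \<in> \<Union>\<C>" "y \<in> \<Union>\<C>"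
    then obtain Z where Z: "Z \<in> \<C>" "x \<in> Z" "y \<in> Z" using two by blast
    then have "Z \<in> cones g" using sub by blast
    then show "x + y \<in> \<Union>\<C>" "x * y \<in> \<Union>\<C>" using Z unfolding cones_def by blast+
  qed
qed

lemma lemma_L:
  assumes F: "F \<in> A" and s: "s \<in> T" and t: "t \<in> T" and eq: "- 1 = s + (- F) * t"
  shows "F \<in> T"
proof -
  have "F * t = 1 + s + (- 1 - (s + (- F) * t))" by (simp add: algebra_simps)
  also have "\<dots> = 1 + s" using eq by simp
  finally have Ft: "F * t = 1 + s" .
  obtain K0 :: nat where K0: "of_nat K0 - t \<in> T" using T_bnd[of t] t T_A by blast
  define K where "K = K0 + 1"
  have K: "of_nat K - t \<in> T" using T_add[OF K0 T_1] by (simp add: K_def algebra_simps)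
  have K1: "K > 0" by (simp add: K_def)
  obtain M :: nat where M: "of_nat M + F \<in> T" using T_bnd[OF F] by blast
  have claim: "\<exists>a::nat. a > 0 \<and> of_nat (K * a) * F + of_nat (a * (M * K - j)) \<in> T" if "j \<le> M * K" for j
    using that
  proof (induct j)
    case 0
    have "of_nat K * (of_nat M + F) \<in> T" using T_mult[OF T_of_nat M] .
    moreover have "of_nat K * (of_nat M + F) = of_nat (K * 1) * F + (of_nat (1 * (M * K - 0)) :: 'b)"
      by (simp add: algebra_simps)
    ultimately show ?case by (intro exI[of _ 1]) simp
  next
    case (Suc j)
    then obtain a :: nat where a: "a > 0" "of_nat (K * a) * F + of_nat (a * (M * K - j)) \<in> T" by auto
    define r where "r = M * K - Suc j"
    have r: "M * K - j = r + 1" using Suc(2) by (simp add: r_def)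
    have X: "of_nat (K * a) * F + of_nat (a * (r + 1)) \<in> T" using a(2) r by simp
    have "(of_nat (K * a) * F + of_nat (a * (r + 1))) * (of_nat K - t) + of_nat (K * a) * s
          + of_nat (a * (r + 1)) * t \<in> T"
      by (rule T_add[OF T_add[OF T_mult[OF X K] T_mult[OF T_of_nat s]] T_mult[OF T_of_nat t]])
    also have "(of_nat (K * a) * F + of_nat (a * (r + 1))) * (of_nat K - t) + of_nat (K * a) * s
          + of_nat (a * (r + 1)) * t = of_nat (K * (K * a)) * F + of_nat ((K * a) * r) - of_nat (K * a) * (F * t - s - 1)"
      by (simp add: algebra_simps)
    also have "\<dots> = of_nat (K * (K * a)) * F + of_nat ((K * a) * r)" using Ft by simp
    finally show ?case using a(1) K1 by (intro exI[of _ "K * a"]) (simp add: r_def)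
  qed
  from claim[of "M * K"] obtain a :: nat where a: "a > 0" "of_nat (K * a) * F \<in> T" by auto
  then show ?thesis using T_divide[of "K * a" F] K1 by simp
qed

theorem KD:
  assumes F: "F \<in> A" and nF: "F \<notin> T"
  shows "\<exists>\<Psi>\<in>H. \<Psi> F \<le> 0"
proof -
  have mF: "- F \<in> A" using A_uminus F by blast
  have Tadd: "\<forall>x\<in>T. \<forall>y\<in>T. x + y \<in> T" and Tmult: "\<forall>x\<in>T. \<forall>y\<in>T. x * y \<in> T"
    using T_add T_mult by auto
  note E = ext_props[OF order_refl T_A Tadd Tmult mF]
  have "- 1 \<notin> ext T (- F)"
  proof
    assume "- 1 \<in> ext T (- F)"
    then obtain s t where "- 1 = s + (- F) * t" "s \<in> T" "t \<in> T" unfolding ext_def by blast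
    then have "F \<in> T" using lemma_L F by blast
    with nF show False by simp
  qed
  then have "ext T (- F) \<in> cones (- F)" using E unfolding cones_def by blast
  then have ne: "cones (- F) \<noteq> {}" by blast
  obtain M where M: "M \<in> cones (- F)" and max: "\<forall>X\<in>cones (- F). M \<subseteq> X \<longrightarrow> X = M"
    using subset_Zorn_nonempty[OF ne cones_chain] by blast
  interpret O: ord_setting A T M
  proof
    show "T \<subseteq> M" "M \<subseteq> A" "- 1 \<notin> M" using M unfolding cones_def by auto
    show "x \<in> M \<Longrightarrow> y \<in> M \<Longrightarrow> x + y \<in> M" for x y using M unfolding cones_def by auto
    show "x \<in> M \<Longrightarrow> y \<in> M \<Longrightarrow> x * y \<in> M" for x y using M unfolding cones_def by auto
    show "x \<in> A \<Longrightarrow> x \<in> M \<or> - x \<in> M" for x using maximal_total[OF M max] by blast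
  qed
  have "- F \<in> M" using M unfolding cones_def by auto
  then have "O.psi F \<le> 0" using O.psi_nonpos F by blast
  then show ?thesis using O.psi_H by blast
qed

theorem KD_strict:
  assumes x: "x \<in> A" and nx: "- x \<notin> T"
  shows "\<exists>\<Psi>\<in>H. \<Psi> x > 0"
proof -
  have "\<not> (\<forall>k::nat. k \<ge> 1 \<longrightarrow> of_nat k * (- x) + 1 \<in> T)" using T_arch[of "- x"] A_uminus x nx by blast
  then obtain k :: nat where k: "k \<ge> 1" "of_nat k * (- x) + 1 \<notin> T" by blast
  have FA: "of_nat k * (- x) + 1 \<in> A" using A_add A_mult A_of_nat A_uminus A_1 x by blast
  obtain \<Psi> where P: "\<Psi> \<in> H" "\<Psi> (of_nat k * (- x) + 1) \<le> 0" using KD[OF FA k(2)] by blast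
  have kx: "of_nat k * (- x) \<in> A" using A_mult A_of_nat A_uminus x by blast
  have "\<Psi> (of_nat k * (- x) + 1) = \<Psi> (of_nat k * (- x)) + \<Psi> 1" by (rule H_add[OF P(1) kx A_1])
  also have "\<Psi> (of_nat k * (- x)) = \<Psi> (of_nat k) * \<Psi> (- x)" by (rule H_mult[OF P(1) A_of_nat A_uminus[OF x]])
  finally have "\<Psi> (of_nat k * (- x) + 1) = of_nat k * (- \<Psi> x) + 1"
    using H_of_nat[OF P(1)] H_uminus[OF P(1) x] H_1[OF P(1)] by simp
  then have "real k * \<Psi> x \<ge> 1" using P(2) by simp
  then have "\<Psi> x > 0" using k(1) by (smt (verit) mult_nonneg_nonpos of_nat_0_le_iff)
  then show ?thesis using P(1) by blast
qed

end


lemma sq_sum_le: "((a::real) + b)^2 \<le> 2 * a^2 + 2 * b^2"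
proof -
  have "0 \<le> (a - b)^2" by simp
  then show ?thesis by (simp add: power2_eq_square algebra_simps)
qed

context kd_setting
begin

lemma H_rat: assumes "\<Psi> \<in> H" "v \<in> T" "of_nat n * v = 1"
  shows "\<Psi> (of_int m * v) = of_int m / of_nat n"
proof -
  have vA: "v \<in> A" using assms(2) T_A by blast
  have "\<Psi> (of_int m * v) = \<Psi> (of_int m) * \<Psi> v" by (rule H_mult[OF assms(1) A_of_int vA])
  also have "\<dots> = of_int m * (1 / of_nat n)" using H_of_int[OF assms(1)] H_inv[OF assms(1) vA assms(3)] by simp
  finally show ?thesis by simp
qed

lemma approx_w:
  assumes Phi: "\<Phi> \<in> H" and fin: "finite C" and CA: "C \<subseteq> A"
  shows "\<forall>\<delta>>0. \<exists>w\<in>T. \<Phi> w < \<delta> \<and> (\<forall>\<Psi>\<in>H. \<forall>c\<in>C. (\<Psi> c - \<Phi> c)^2 \<le> 2 * \<Psi> w + 2 * \<delta>)"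
  using fin CA
proof (induct C rule: finite_induct)
  case empty
  show ?case
  proof (intro allI impI)
    fix \<delta> :: real assume "\<delta> > 0"
    then show "\<exists>w\<in>T. \<Phi> w < \<delta> \<and> (\<forall>\<Psi>\<in>H. \<forall>c\<in>{}. (\<Psi> c - \<Phi> c)^2 \<le> 2 * \<Psi> w + 2 * \<delta>)"
      using T_0 H_0[OF Phi] by (intro bexI[of _ 0]) auto
  qed
next
  case (insert c C)
  have cA: "c \<in> A" and CA: "C \<subseteq> A" using insert(4) by auto
  show ?case
  proof (intro allI impI)
    fix \<delta> :: real assume d: "\<delta> > 0"
    obtain w0 where w0: "w0 \<in> T" "\<Phi> w0 < \<delta> / 2"
      "\<forall>\<Psi>\<in>H. \<forall>c\<in>C. (\<Psi> c - \<Phi> c)^2 \<le> 2 * \<Psi> w0 + 2 * (\<delta> / 2)"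
      using insert(3)[OF CA] d by (meson half_gt_zero)
    define \<eta> where "\<eta> = min (1/2) (\<delta> / 4)"
    have eta: "\<eta> > 0" "\<eta> \<le> 1/2" "\<eta> \<le> \<delta> / 4" using d by (auto simp: \<eta>_def)
    have eta2: "\<eta>^2 \<le> \<delta> / 8"
    proof -
      have "\<eta>^2 = \<eta> * \<eta>" by (simp add: power2_eq_square)
      also have "\<dots> \<le> (1/2) * \<eta>" using eta by (intro mult_right_mono) auto
      also have "\<dots> \<le> \<delta> / 8" using eta by simp
      finally show ?thesis .
    qed
    have "\<Phi> c - \<eta> < \<Phi> c + \<eta>" using eta by simp
    from rat_between[OF this] obtain m n where mn: "n > 0" "\<Phi> c - \<eta> < of_int m / of_nat n"
      "of_int m / of_nat n < \<Phi> c + \<eta>" by auto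
    obtain v where v: "v \<in> T" "of_nat n * v = 1" using T_inv[OF mn(1)] by blast
    have vA: "v \<in> A" using v T_A by blast
    define z where "z = c - of_int m * v"
    have zA: "z \<in> A" unfolding z_def using cA vA A_diff A_mult A_of_int by blast
    have Hz: "\<Psi> z = \<Psi> c - of_int m / of_nat n" if "\<Psi> \<in> H" for \<Psi>
      unfolding z_def using H_diff[OF that cA A_mult[OF A_of_int vA]] H_rat[OF that v] by simp
    define w where "w = w0 + z * z"
    have wT: "w \<in> T" unfolding w_def using T_add w0(1) T_sq zA by blast
    have w0A: "w0 \<in> A" using w0(1) T_A by blast
    have Hw: "\<Psi> w = \<Psi> w0 + (\<Psi> c - of_int m / of_nat n)^2" if "\<Psi> \<in> H" for \<Psi>
      unfolding w_def using H_add[OF that w0A A_mult[OF zA zA]] H_mult[OF that zA zA] Hz[OF that]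
      by (simp add: power2_eq_square)
    have dist: "(\<Phi> c - of_int m / of_nat n)^2 \<le> \<eta>^2"
    proof -
      have "\<bar>\<Phi> c - of_int m / of_nat n\<bar> \<le> \<eta>" using mn by auto
      then show ?thesis by (metis abs_ge_zero power2_abs power_mono)
    qed
    show "\<exists>w\<in>T. \<Phi> w < \<delta> \<and> (\<forall>\<Psi>\<in>H. \<forall>c'\<in>insert c C. (\<Psi> c' - \<Phi> c')^2 \<le> 2 * \<Psi> w + 2 * \<delta>)"
    proof (intro bexI[OF _ wT] conjI ballI)
      show "\<Phi> w < \<delta>" using Hw[OF Phi] w0(2) dist eta2 d by linarith
      fix \<Psi> c' assume Psi: "\<Psi> \<in> H" and c': "c' \<in> insert c C"
      have w0pos: "\<Psi> w0 \<ge> 0" using H_T[OF Psi w0(1)] .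
      have sqpos: "(\<Psi> c - of_int m / of_nat n)^2 \<ge> 0" by simp
      show "(\<Psi> c' - \<Phi> c')^2 \<le> 2 * \<Psi> w + 2 * \<delta>"
      proof (cases "c' = c")
        case True
        have "(\<Psi> c - \<Phi> c)^2 = ((\<Psi> c - of_int m / of_nat n) + (of_int m / of_nat n - \<Phi> c))^2" by simp
        also have "\<dots> \<le> 2 * (\<Psi> c - of_int m / of_nat n)^2 + 2 * (of_int m / of_nat n - \<Phi> c)^2"
          by (rule sq_sum_le)
        also have "(of_int m / of_nat n - \<Phi> c)^2 = (\<Phi> c - of_int m / of_nat n)^2"
          by (simp add: power2_commute)
        finally have cc: "(\<Psi> c - \<Phi> c)^2 \<le> 2 * (\<Psi> c - of_int m / of_nat n)^2 + 2 * (\<Phi> c - of_int m / of_nat n)^2" .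
        show ?thesis unfolding True using cc Hw[OF Psi] w0pos dist eta2 d by linarith
      next
        case False
        then have "c' \<in> C" using c' by blast
        then have "(\<Psi> c' - \<Phi> c')^2 \<le> 2 * \<Psi> w0 + 2 * (\<delta> / 2)" using w0(3) Psi by blast
        then show ?thesis using Hw[OF Psi] sqpos d by linarith
      qed
    qed
  qed
qed

theorem dense_H:
  assumes Phi: "\<Phi> \<in> H" and fin: "finite C" and CA: "C \<subseteq> A" and e: "\<epsilon> > 0"
    and uT: "u \<in> T" and faith: "\<And>a. a \<in> A \<Longrightarrow> u * a \<in> T \<Longrightarrow> a \<in> T"
  shows "\<exists>\<Psi>\<in>H. \<Psi> u > 0 \<and> (\<forall>c\<in>C. \<bar>\<Psi> c - \<Phi> c\<bar> < \<epsilon>)"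
proof -
  have uA: "u \<in> A" using uT T_A by blast
  obtain N :: nat where N: "N > 4 / \<epsilon>^2" using reals_Archimedean2 by blast
  have Npos: "N > 0" using N e by (metis of_nat_0_less_iff less_trans zero_less_divide_iff zero_less_numeral zero_less_power)
  define \<delta> where "\<delta> = 1 / real N"
  have dpos: "\<delta> > 0" using Npos by (simp add: \<delta>_def)
  have d4: "4 * \<delta> < \<epsilon>^2"
  proof -
    have "4 < \<epsilon>^2 * real N" using N e by (simp add: divide_less_eq mult.commute)
    then show ?thesis using Npos by (simp add: \<delta>_def divide_simps mult.commute)
  qed
  obtain w where w: "w \<in> T" "\<Phi> w < \<delta>" "\<forall>\<Psi>\<in>H. \<forall>c\<in>C. (\<Psi> c - \<Phi> c)^2 \<le> 2 * \<Psi> w + 2 * \<delta>"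
    using approx_w[OF Phi fin CA] dpos by blast
  obtain v where v: "v \<in> T" "of_nat N * v = 1" using T_inv[OF Npos] by blast
  have vA: "v \<in> A" and wA: "w \<in> A" using v w T_A by auto
  have Hv: "\<Psi> v = \<delta>" if "\<Psi> \<in> H" for \<Psi> using H_inv[OF that vA v(2)] by (simp add: \<delta>_def)
  define b where "b = v - w"
  have bA: "b \<in> A" unfolding b_def using A_diff vA wA by blast
  have Hb: "\<Psi> b = \<delta> - \<Psi> w" if "\<Psi> \<in> H" for \<Psi> unfolding b_def using H_diff[OF that vA wA] Hv[OF that] by simp
  have "- (u * b) \<notin> T"
  proof
    assume "- (u * b) \<in> T"
    then have "u * (- b) \<in> T" by simp
    then have "- b \<in> T" using faith A_uminus bA by blast
    then have "\<Phi> (- b) \<ge> 0" using H_T[OF Phi] by blast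
    then show False using H_uminus[OF Phi bA] Hb[OF Phi] w(2) by simp
  qed
  then obtain \<Psi> where Psi: "\<Psi> \<in> H" "\<Psi> (u * b) > 0" using KD_strict A_mult uA bA by blast
  have prod: "\<Psi> u * \<Psi> b > 0" using Psi H_mult[OF Psi(1) uA bA] by simp
  have u0: "\<Psi> u \<ge> 0" using H_T[OF Psi(1) uT] .
  have upos: "\<Psi> u > 0" using prod u0 by (metis less_eq_real_def mult_zero_left less_irrefl)
  have bpos: "\<Psi> b > 0" using prod upos by (simp add: zero_less_mult_iff)
  have wlt: "\<Psi> w < \<delta>" using bpos Hb[OF Psi(1)] by simp
  have "\<forall>c\<in>C. \<bar>\<Psi> c - \<Phi> c\<bar> < \<epsilon>"
  proof
    fix c assume c: "c \<in> C"
    have "(\<Psi> c - \<Phi> c)^2 \<le> 2 * \<Psi> w + 2 * \<delta>" using w(3) Psi(1) c by blast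
    also have "\<dots> < \<epsilon>^2" using wlt d4 by linarith
    finally have "\<bar>\<Psi> c - \<Phi> c\<bar>^2 < \<epsilon>^2" by simp
    then show "\<bar>\<Psi> c - \<Phi> c\<bar> < \<epsilon>" using e by (meson abs_ge_zero less_le power2_less_imp_less)
  qed
  then show ?thesis using upos Psi(1) by blast
qed

end


locale Rset =
  fixes P :: "'a::comm_ring_1 set"
  assumes po: "po_cring P" and ar: "archimedean_cone P" and lz: "localizable P"
begin

lemma P_add: "a \<in> P \<Longrightarrow> b \<in> P \<Longrightarrow> a + b \<in> P" using po unfolding po_cring_def by blast
lemma P_mult: "a \<in> P \<Longrightarrow> b \<in> P \<Longrightarrow> a * b \<in> P" using po unfolding po_cring_def by blast
lemma P_sq: "a * a \<in> P" using po unfolding po_cring_def by blast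
lemma P_anti: "a \<in> P \<Longrightarrow> - a \<in> P \<Longrightarrow> a = 0" using po unfolding po_cring_def by blast
lemma P_1: "1 \<in> P" using P_sq[of 1] by simp
lemma P_0: "0 \<in> P" using P_sq[of 0] by simp
lemma P_nat: "of_nat n \<in> P" by (induct n) (simp_all add: P_0 P_1 P_add)
lemma P_arch: "(\<And>k::nat. k \<ge> 1 \<Longrightarrow> of_nat k * g + h \<in> P) \<Longrightarrow> g \<in> P"
  using ar unfolding archimedean_cone_def by blast

lemma Loc_P: "t \<in> Loc P \<Longrightarrow> t \<in> P"
  unfolding Loc_def using P_add[of "t - 1" 1] P_1 by auto
lemma Loc_sat: "t \<in> Loc P \<Longrightarrow> r * t \<in> P \<Longrightarrow> r \<in> P"
  unfolding Loc_def by blast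
lemma Loc_1: "1 \<in> Loc P" unfolding Loc_def using P_0 by simp
lemma Loc_mult: assumes "t1 \<in> Loc P" "t2 \<in> Loc P" shows "t1 * t2 \<in> Loc P"
proof -
  have eq: "t1 * t2 - 1 = (t1 - 1) * t2 + (t2 - 1)" by (simp add: algebra_simps)
  have h: "t1 - 1 \<in> P" "t2 - 1 \<in> P" using assms unfolding Loc_def by blast+
  then have "(t1 - 1) * t2 \<in> P" using P_mult Loc_P[OF assms(2)] by blast
  then have "t1 * t2 - 1 \<in> P" unfolding eq using h(2) by (rule P_add)
  moreover have "r \<in> P" if "r * (t1 * t2) \<in> P" for r
  proof -
    have "(r * t1) * t2 \<in> P" using that by (simp add: mult.assoc)
    then have "r * t1 \<in> P" using Loc_sat assms(2) by blast
    then show ?thesis using Loc_sat assms(1) by blast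
  qed
  ultimately show ?thesis unfolding Loc_def by blast
qed
lemma Loc_nzd: assumes "t \<in> Loc P" shows "nzd t"
  unfolding nzd_def
proof (intro allI impI)
  fix x assume "x * t = 0"
  then have "x * t \<in> P" "(- x) * t \<in> P" using P_0 by auto
  then have "x \<in> P" "- x \<in> P" using Loc_sat assms by blast+
  then show "x = 0" using P_anti by blast
qed

lemma Loc_nat: assumes n: "n > 0" shows "(of_nat n :: 'a) \<in> Loc P"
proof -
  have "of_nat n - 1 = (of_nat (n - 1) :: 'a)" using n by (simp add: of_nat_diff)
  then have "of_nat n - 1 \<in> P" using P_nat by simp
  moreover have "r \<in> P" if rn: "r * of_nat n \<in> P" for r
  proof -
    obtain e where e: "e \<in> Loc P" "r + e \<in> P" "e - r \<in> P" using lz unfolding localizable_def by blast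
    have eP: "e \<in> P" using Loc_P e(1) by blast
    have "of_nat k * r + of_nat (n - 1) * e \<in> P" if "k \<ge> 1" for k :: nat
    proof -
      define q where "q = k div n"
      define m where "m = k mod n"
      have k: "k = q * n + m" by (simp add: q_def m_def)
      have mn: "m \<le> n - 1" using n by (simp add: m_def less_Suc_eq_le[symmetric]) 
      define d where "d = n - 1 - m"
      have nd: "n - 1 = m + d" using mn by (simp add: d_def)
      have "of_nat k * r + of_nat (n - 1) * e
          = of_nat q * (r * of_nat n) + of_nat m * (r + e) + of_nat d * e"
        unfolding nd k by (simp add: algebra_simps)
      also have "\<dots> \<in> P" by (intro P_add P_mult P_nat rn e eP)
      finally show ?thesis .
    qed
    then show ?thesis by (rule P_arch)
  qed
  ultimately show ?thesis unfolding Loc_def by blast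
qed

lemma P_div_nat: "n > 0 \<Longrightarrow> r * of_nat n \<in> P \<Longrightarrow> r \<in> P"
  using Loc_nat Loc_sat by blast

lemma bd_iff: "x \<in> bdloc P \<longleftrightarrow> snd x \<in> Loc P \<and> (\<exists>n::nat. fst x + of_nat n * snd x \<in> P \<and> of_nat n * snd x - fst x \<in> P)"
  unfolding bdloc_def frac_le_def by simp

lemma bdI: "t \<in> Loc P \<Longrightarrow> r + of_nat n * t \<in> P \<Longrightarrow> of_nat n * t - r \<in> P \<Longrightarrow> (r, t) \<in> bdloc P"
  unfolding bd_iff by auto

lemma bd_Loc: "x \<in> bdloc P \<Longrightarrow> snd x \<in> Loc P" unfolding bd_iff by blast

lemma bd_add: assumes "x \<in> bdloc P" "y \<in> bdloc P" shows "frac_add x y \<in> bdloc P"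
proof -
  obtain r1 t1 r2 t2 where xy: "x = (r1, t1)" "y = (r2, t2)" by fastforce
  obtain n1 where n1: "t1 \<in> Loc P" "r1 + of_nat n1 * t1 \<in> P" "of_nat n1 * t1 - r1 \<in> P" using assms(1) xy unfolding bd_iff by auto
  obtain n2 where n2: "t2 \<in> Loc P" "r2 + of_nat n2 * t2 \<in> P" "of_nat n2 * t2 - r2 \<in> P" using assms(2) xy unfolding bd_iff by auto
  have t: "t1 \<in> P" "t2 \<in> P" using n1 n2 Loc_P by auto
  have e1: "(r1 * t2 + r2 * t1) + of_nat (n1 + n2) * (t1 * t2) = t2 * (r1 + of_nat n1 * t1) + t1 * (r2 + of_nat n2 * t2)"
    by (simp add: algebra_simps)
  have e2: "of_nat (n1 + n2) * (t1 * t2) - (r1 * t2 + r2 * t1) = t2 * (of_nat n1 * t1 - r1) + t1 * (of_nat n2 * t2 - r2)"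
    by (simp add: algebra_simps)
  have "(r1 * t2 + r2 * t1) + of_nat (n1 + n2) * (t1 * t2) \<in> P"
    unfolding e1 by (rule P_add[OF P_mult[OF t(2) n1(2)] P_mult[OF t(1) n2(2)]])
  moreover have "of_nat (n1 + n2) * (t1 * t2) - (r1 * t2 + r2 * t1) \<in> P"
    unfolding e2 by (rule P_add[OF P_mult[OF t(2) n1(3)] P_mult[OF t(1) n2(3)]])
  ultimately show ?thesis unfolding xy frac_add_def using Loc_mult[OF n1(1) n2(1)]
    by (intro bdI[where n = "n1 + n2"]) auto
qed

lemma bd_mult: assumes "x \<in> bdloc P" "y \<in> bdloc P" shows "frac_mult x y \<in> bdloc P"
proof -
  obtain r1 t1 r2 t2 where xy: "x = (r1, t1)" "y = (r2, t2)" by fastforce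
  obtain n1 where n1: "t1 \<in> Loc P" "r1 + of_nat n1 * t1 \<in> P" "of_nat n1 * t1 - r1 \<in> P" using assms(1) xy unfolding bd_iff by auto
  obtain n2 where n2: "t2 \<in> Loc P" "r2 + of_nat n2 * t2 \<in> P" "of_nat n2 * t2 - r2 \<in> P" using assms(2) xy unfolding bd_iff by auto
  have e1: "(r1 * r2 + of_nat (n1 * n2) * (t1 * t2)) * of_nat 2 =
     (r1 + of_nat n1 * t1) * (r2 + of_nat n2 * t2) + (of_nat n1 * t1 - r1) * (of_nat n2 * t2 - r2)"
    by (simp add: algebra_simps)
  have e2: "(of_nat (n1 * n2) * (t1 * t2) - r1 * r2) * of_nat 2 =
     (of_nat n1 * t1 - r1) * (r2 + of_nat n2 * t2) + (r1 + of_nat n1 * t1) * (of_nat n2 * t2 - r2)"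
    by (simp add: algebra_simps)
  have "(r1 * r2 + of_nat (n1 * n2) * (t1 * t2)) * of_nat 2 \<in> P"
    unfolding e1 by (rule P_add[OF P_mult[OF n1(2) n2(2)] P_mult[OF n1(3) n2(3)]])
  then have "r1 * r2 + of_nat (n1 * n2) * (t1 * t2) \<in> P" by (rule P_div_nat[rotated]) simp
  moreover have "(of_nat (n1 * n2) * (t1 * t2) - r1 * r2) * of_nat 2 \<in> P"
    unfolding e2 by (rule P_add[OF P_mult[OF n1(3) n2(2)] P_mult[OF n1(2) n2(3)]])
  then have "of_nat (n1 * n2) * (t1 * t2) - r1 * r2 \<in> P" by (rule P_div_nat[rotated]) simp
  ultimately show ?thesis unfolding xy frac_mult_def using Loc_mult[OF n1(1) n2(1)]
    by (intro bdI[where n = "n1 * n2"]) auto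
qed

lemma bd_uminus: assumes "x \<in> bdloc P" shows "(- fst x, snd x) \<in> bdloc P"
proof -
  obtain n :: nat where n: "snd x \<in> Loc P" "fst x + of_nat n * snd x \<in> P" "of_nat n * snd x - fst x \<in> P"
    using assms unfolding bd_iff by blast
  have "- fst x + of_nat n * snd x \<in> P" using n(3) by (simp add: algebra_simps)
  moreover have "of_nat n * snd x - - fst x \<in> P" using n(2) by (simp add: algebra_simps)
  ultimately show ?thesis using n(1) by (intro bdI[where n = n]) simp_all
qed

lemma bd_0: "(0, 1) \<in> bdloc P" using Loc_1 P_0 by (intro bdI[where n = 0]) auto
lemma bd_1: "(1, 1) \<in> bdloc P" using Loc_1 P_0 P_nat[of 2] by (intro bdI[where n = 1]) auto
lemma bd_1t: assumes "t \<in> Loc P" shows "(1, t) \<in> bdloc P"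
proof -
  have "1 + t \<in> P" using P_add[OF P_1 Loc_P[OF assms]] .
  moreover have "t - 1 \<in> P" using assms unfolding Loc_def by blast
  ultimately show ?thesis using assms by (intro bdI[where n = 1]) simp_all
qed
lemma bd_tt: assumes "t \<in> Loc P" shows "(t, t) \<in> bdloc P"
  by (rule bdI[where n = 1]) (use assms P_add[OF Loc_P[OF assms] Loc_P[OF assms]] P_0 in simp_all)
lemma bd_nat: "(of_nat n, 1) \<in> bdloc P"
  by (rule bdI[where n = n]) (use Loc_1 P_0 P_add[OF P_nat[of n] P_nat[of n]] in simp_all)

definition frc :: "'a \<times> 'a \<Rightarrow> 'a fr" where "frc x = Fr (fst x) (snd x)"

definition FA :: "'a fr set" where "FA = frc ` bdloc P"
definition FT :: "'a fr set" where "FT = frc ` {x \<in> bdloc P. fst x \<in> P}"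

lemma frc_add: "x \<in> bdloc P \<Longrightarrow> y \<in> bdloc P \<Longrightarrow> frc x + frc y = frc (frac_add x y)"
  unfolding frc_def frac_add_def using bd_Loc Loc_nzd by (simp add: add_fr)
lemma frc_mult: "x \<in> bdloc P \<Longrightarrow> y \<in> bdloc P \<Longrightarrow> frc x * frc y = frc (frac_mult x y)"
  unfolding frc_def frac_mult_def using bd_Loc Loc_nzd by (simp add: mult_fr)
lemma frc_uminus: "- frc x = frc (- fst x, snd x)"
  unfolding frc_def by (simp add: minus_fr)
lemma frc_eq: "x \<in> bdloc P \<Longrightarrow> y \<in> bdloc P \<Longrightarrow> frc x = frc y \<longleftrightarrow> frac_eq x y"
  unfolding frc_def frac_eq_def using bd_Loc Loc_nzd by (simp add: eq_fr)
lemma frc_1: "frc (1, 1) = 1" unfolding frc_def by (simp add: One_fr)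
lemma frc_0: "frc (0, 1) = 0" unfolding frc_def by (simp add: Zero_fr)
lemma frc_nat: "frc (of_nat n, 1) = of_nat n" unfolding frc_def by (simp add: of_nat_fr)

lemma FT_imp: assumes "snd x \<in> Loc P" "frc x \<in> FT" shows "fst x \<in> P"
proof -
  obtain y where y: "y \<in> bdloc P" "fst y \<in> P" "frc x = frc y" using assms(2) unfolding FT_def by blast
  have "fst x * snd y = fst y * snd x" using y(3) assms(1) bd_Loc[OF y(1)] Loc_nzd unfolding frc_def
    by (simp add: eq_fr)
  moreover have "fst y * snd x \<in> P" using y(2) assms(1) Loc_P P_mult by blast
  ultimately show ?thesis using Loc_sat bd_Loc[OF y(1)] by metis
qed

lemma FT_I: "x \<in> bdloc P \<Longrightarrow> fst x \<in> P \<Longrightarrow> frc x \<in> FT" unfolding FT_def by blast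

lemma FT_iff: "x \<in> bdloc P \<Longrightarrow> frc x \<in> FT \<longleftrightarrow> fst x \<in> P"
  using FT_imp FT_I bd_Loc by blast

lemma FA_I: "x \<in> bdloc P \<Longrightarrow> frc x \<in> FA" unfolding FA_def by blast

lemma FA_E: "c \<in> FA \<Longrightarrow> (\<And>x. x \<in> bdloc P \<Longrightarrow> c = frc x \<Longrightarrow> thesis) \<Longrightarrow> thesis"
  unfolding FA_def by blast

lemma kd: "kd_setting FA FT"
proof
  show "0 \<in> FA" using FA_I[OF bd_0] frc_0 by simp
  show "1 \<in> FA" using FA_I[OF bd_1] frc_1 by simp
  show "x + y \<in> FA" if "x \<in> FA" "y \<in> FA" for x y
    using that by (elim FA_E) (simp add: frc_add FA_I bd_add)
  show "x * y \<in> FA" if "x \<in> FA" "y \<in> FA" for x y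
    using that by (elim FA_E) (simp add: frc_mult FA_I bd_mult)
  show "- x \<in> FA" if "x \<in> FA" for x
    using that by (elim FA_E) (simp add: frc_uminus FA_I bd_uminus)
  show "FT \<subseteq> FA" unfolding FT_def FA_def by blast
  show "x + y \<in> FT" if xy: "x \<in> FT" "y \<in> FT" for x y
  proof -
    obtain a b where ab: "a \<in> bdloc P" "fst a \<in> P" "x = frc a" "b \<in> bdloc P" "fst b \<in> P" "y = frc b"
      using xy unfolding FT_def by blast
    have "snd a \<in> P" "snd b \<in> P" using ab(1,4) bd_Loc Loc_P by blast+
    then have "fst (frac_add a b) \<in> P" unfolding frac_add_def using ab by (auto intro!: P_add P_mult)
    then show ?thesis using ab frc_add bd_add FT_I by simp
  qed
  show "x * y \<in> FT" if xy: "x \<in> FT" "y \<in> FT" for x y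
  proof -
    obtain a b where ab: "a \<in> bdloc P" "fst a \<in> P" "x = frc a" "b \<in> bdloc P" "fst b \<in> P" "y = frc b"
      using xy unfolding FT_def by blast
    have "fst (frac_mult a b) \<in> P" unfolding frac_mult_def using ab by (auto intro!: P_mult)
    then show ?thesis using ab frc_mult bd_mult FT_I by simp
  qed
  show "x * x \<in> FT" if xA: "x \<in> FA" for x
  proof -
    obtain a where a: "a \<in> bdloc P" "x = frc a" using xA by (elim FA_E) blast
    have "fst (frac_mult a a) \<in> P" unfolding frac_mult_def using P_sq by simp
    then show ?thesis using a frc_mult bd_mult FT_I by simp
  qed
  show "\<exists>n::nat. of_nat n - x \<in> FT \<and> of_nat n + x \<in> FT" if xA: "x \<in> FA" for x
  proof -
    obtain a where a: "a \<in> bdloc P" "x = frc a" using xA by (elim FA_E) blast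
    obtain n :: nat where n: "fst a + of_nat n * snd a \<in> P" "of_nat n * snd a - fst a \<in> P"
      using a(1) unfolding bd_iff by blast
    have m: "(- fst a, snd a) \<in> bdloc P" using bd_uminus[OF a(1)] .
    have "of_nat n - x = frc (frac_add (of_nat n, 1) (- fst a, snd a))"
      using a frc_add[OF bd_nat m] frc_nat frc_uminus by (simp add: diff_conv_add_uminus del: add_uminus_conv_diff)
    moreover have "fst (frac_add (of_nat n, 1) (- fst a, snd a)) \<in> P" using n(2) by (simp add: frac_add_def)
    ultimately have 1: "of_nat n - x \<in> FT" using FT_I bd_add[OF bd_nat m] by simp
    have "of_nat n + x = frc (frac_add (of_nat n, 1) a)"
      using a frc_add[OF bd_nat a(1)] frc_nat by simp
    moreover have "fst (frac_add (of_nat n, 1) a) \<in> P" using n(1) by (simp add: frac_add_def add.commute)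
    ultimately have 2: "of_nat n + x \<in> FT" using FT_I bd_add[OF bd_nat a(1)] by simp
    from 1 2 show ?thesis by blast
  qed
  show "\<exists>v\<in>FT. of_nat n * v = 1" if n0: "n > 0" for n
  proof -
    have L: "(of_nat n :: 'a) \<in> Loc P" using Loc_nat[OF n0] .
    have "frc (1, of_nat n) \<in> FT" using FT_I bd_1t[OF L] P_1 by simp
    moreover have "of_nat n * frc (1, of_nat n) = 1"
    proof -
      have "of_nat n * frc (1, of_nat n) = Fr (of_nat n * 1) (1 * of_nat n)"
        using Loc_nzd[OF L] unfolding frc_def by (simp add: of_nat_fr mult_fr)
      also have "\<dots> = Fr 1 1" using Loc_nzd[OF L] by (simp add: eq_fr)
      finally show ?thesis by (simp add: One_fr)
    qed
    ultimately show ?thesis by blast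
  qed
  show "- 1 \<notin> FT"
  proof
    assume "- 1 \<in> FT"
    then have "frc (- 1, 1) \<in> FT" using frc_uminus[of "(1,1)"] frc_1 by simp
    then have "- 1 \<in> P" using FT_imp[of "(-1, 1)"] Loc_1 by simp
    then show False using P_anti[of 1] P_1 by simp
  qed
  show "g \<in> FT" if g: "g \<in> FA" and h: "\<forall>k::nat. k \<ge> 1 \<longrightarrow> of_nat k * g + 1 \<in> FT" for g
  proof -
    obtain a where a: "a \<in> bdloc P" "g = frc a" using g by (elim FA_E) blast
    have "of_nat k * fst a + snd a \<in> P" if k: "k \<ge> 1" for k :: nat
    proof -
      have "of_nat k * g + 1 = frc (frac_add (frac_mult (of_nat k, 1) a) (1, 1))"
        using a frc_mult[OF bd_nat a(1)] frc_add[OF bd_mult[OF bd_nat a(1)] bd_1] frc_nat frc_1 by simp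
      moreover have "of_nat k * g + 1 \<in> FT" using h k by blast
      ultimately have "frc (frac_add (frac_mult (of_nat k, 1) a) (1, 1)) \<in> FT" by simp
      then have "fst (frac_add (frac_mult (of_nat k, 1) a) (1, 1)) \<in> P"
        using FT_iff bd_add[OF bd_mult[OF bd_nat a(1)] bd_1] by blast
      then show ?thesis by (simp add: frac_add_def frac_mult_def)
    qed
    then have "fst a \<in> P" by (rule P_arch)
    then show ?thesis using a FT_I by simp
  qed
qed

end


sublocale Rset \<subseteq> K: kd_setting FA FT by (rule kd)

context Rset
begin

definition toK :: "('a fr \<Rightarrow> real) \<Rightarrow> ('a \<times> 'a \<Rightarrow> real)" where
  "toK \<Psi> = (\<lambda>x. if x \<in> bdloc P then \<Psi> (frc x) else 0)"

lemma toK_Kchar: assumes H: "\<Psi> \<in> K.H" shows "toK \<Psi> \<in> Kchar P"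
  unfolding Kchar_def mem_Collect_eq
proof (intro conjI ballI impI allI)
  fix x y assume xy: "x \<in> bdloc P" "y \<in> bdloc P" "frac_eq x y"
  then have "frc x = frc y" using frc_eq by blast
  then show "toK \<Psi> x = toK \<Psi> y" unfolding toK_def using xy by simp
next
  show "toK \<Psi> (1, 1) = 1" unfolding toK_def using bd_1 frc_1 K.H_1[OF H] by simp
next
  fix x y assume xy: "x \<in> bdloc P" "y \<in> bdloc P"
  have "toK \<Psi> (frac_add x y) = \<Psi> (frc (frac_add x y))" using bd_add xy by (simp add: toK_def)
  also have "\<dots> = \<Psi> (frc x + frc y)" using frc_add[OF xy] by simp
  also have "\<dots> = \<Psi> (frc x) + \<Psi> (frc y)" by (rule K.H_add[OF H FA_I[OF xy(1)] FA_I[OF xy(2)]])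
  finally show "toK \<Psi> (frac_add x y) = toK \<Psi> x + toK \<Psi> y" using xy by (simp add: toK_def)
  have "toK \<Psi> (frac_mult x y) = \<Psi> (frc (frac_mult x y))" using bd_mult xy by (simp add: toK_def)
  also have "\<dots> = \<Psi> (frc x * frc y)" using frc_mult[OF xy] by simp
  also have "\<dots> = \<Psi> (frc x) * \<Psi> (frc y)" by (rule K.H_mult[OF H FA_I[OF xy(1)] FA_I[OF xy(2)]])
  finally show "toK \<Psi> (frac_mult x y) = toK \<Psi> x * toK \<Psi> y" using xy by (simp add: toK_def)
next
  fix x assume x: "x \<in> bdloc P" and le: "frac_le P (0, 1) x"
  have "fst x \<in> P" using le unfolding frac_le_def by simp
  then have "frc x \<in> FT" using FT_I x by blast
  then show "toK \<Psi> x \<ge> 0" unfolding toK_def using x K.H_T[OF H] by simp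
next
  fix x assume "x \<notin> bdloc P"
  then show "toK \<Psi> x = 0" unfolding toK_def by simp
qed

lemma Kchar_props:
  assumes "\<phi> \<in> Kchar P"
  shows "\<And>x y. x \<in> bdloc P \<Longrightarrow> y \<in> bdloc P \<Longrightarrow> frac_eq x y \<Longrightarrow> \<phi> x = \<phi> y"
    and "\<phi> (1, 1) = 1"
    and "\<And>x y. x \<in> bdloc P \<Longrightarrow> y \<in> bdloc P \<Longrightarrow> \<phi> (frac_add x y) = \<phi> x + \<phi> y"
    and "\<And>x y. x \<in> bdloc P \<Longrightarrow> y \<in> bdloc P \<Longrightarrow> \<phi> (frac_mult x y) = \<phi> x * \<phi> y"
    and "\<And>x. x \<in> bdloc P \<Longrightarrow> frac_le P (0, 1) x \<Longrightarrow> \<phi> x \<ge> 0"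
    and "\<And>x. x \<notin> bdloc P \<Longrightarrow> \<phi> x = 0"
  using assms unfolding Kchar_def by blast+

lemma Kchar_H:
  assumes phi: "\<phi> \<in> Kchar P"
  shows "\<exists>\<Phi>\<in>K.H. \<forall>x\<in>bdloc P. \<phi> x = \<Phi> (frc x)"
proof -
  define \<Phi> where "\<Phi> c = \<phi> (SOME x. x \<in> bdloc P \<and> frc x = c)" for c
  note props = Kchar_props[OF phi]
  have Phi_frc: "\<Phi> (frc x) = \<phi> x" if x: "x \<in> bdloc P" for x
  proof -
    have ex: "\<exists>y. y \<in> bdloc P \<and> frc y = frc x" using x by blast
    define y where "y = (SOME y. y \<in> bdloc P \<and> frc y = frc x)"
    have y: "y \<in> bdloc P" "frc y = frc x" using someI_ex[OF ex] unfolding y_def by blast+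
    have "frac_eq y x" using frc_eq[OF y(1) x] y(2) by simp
    then have "\<phi> y = \<phi> x" using props(1)[OF y(1) x] by blast
    then show ?thesis unfolding \<Phi>_def y_def by simp
  qed
  have "\<Phi> \<in> K.H" unfolding K.H_def mem_Collect_eq
  proof (intro conjI ballI)
    fix c d assume c: "c \<in> FA" and d: "d \<in> FA"
    obtain x where x: "x \<in> bdloc P" "c = frc x" using c by (elim FA_E) blast
    obtain y where y: "y \<in> bdloc P" "d = frc y" using d by (elim FA_E) blast
    show "\<Phi> (c + d) = \<Phi> c + \<Phi> d"
      using x y frc_add[OF x(1) y(1)] Phi_frc bd_add props(3) by simp
    show "\<Phi> (c * d) = \<Phi> c * \<Phi> d"
      using x y frc_mult[OF x(1) y(1)] Phi_frc bd_mult props(4) by simp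
  next
    show "\<Phi> 1 = 1" using Phi_frc[OF bd_1] frc_1 props(2) by simp
  next
    fix t assume "t \<in> FT"
    then obtain x where x: "x \<in> bdloc P" "fst x \<in> P" "t = frc x" unfolding FT_def by blast
    have "frac_le P (0, 1) x" unfolding frac_le_def using x(2) by simp
    then show "\<Phi> t \<ge> 0" using props(5) x Phi_frc by simp
  qed
  then show ?thesis using Phi_frc by (intro bexI[of _ \<Phi>]) auto
qed

lemma K_dense:
  assumes t: "t \<in> Loc P" and phi: "\<phi> \<in> Kchar P" and fin: "finite F" and e: "\<epsilon> > 0"
  shows "\<exists>\<psi>\<in>Kchar P. \<psi> (1, t) > 0 \<and> (\<forall>x\<in>F. \<bar>\<psi> x - \<phi> x\<bar> < \<epsilon>)"
proof -
  obtain \<Phi> where Phi: "\<Phi> \<in> K.H" "\<forall>x\<in>bdloc P. \<phi> x = \<Phi> (frc x)" using Kchar_H[OF phi] by blast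
  define C where "C = frc ` (F \<inter> bdloc P)"
  have finC: "finite C" unfolding C_def using fin by simp
  have CA: "C \<subseteq> FA" unfolding C_def FA_def by blast
  define u where "u = frc (1, t)"
  have uT: "u \<in> FT" unfolding u_def using FT_I bd_1t[OF t] P_1 by simp
  have faith: "a \<in> FT" if a: "a \<in> FA" "u * a \<in> FT" for a
  proof -
    obtain x where x: "x \<in> bdloc P" "a = frc x" using a(1) by (elim FA_E) blast
    have "u * a = frc (frac_mult (1, t) x)" unfolding u_def using frc_mult[OF bd_1t[OF t] x(1)] x(2) by simp
    then have "fst (frac_mult (1, t) x) \<in> P" using FT_iff[OF bd_mult[OF bd_1t[OF t] x(1)]] a(2) by simp
    then have "fst x \<in> P" by (simp add: frac_mult_def)
    then show ?thesis using x FT_I by simp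
  qed
  obtain \<Psi> where Psi: "\<Psi> \<in> K.H" "\<Psi> u > 0" "\<forall>c\<in>C. \<bar>\<Psi> c - \<Phi> c\<bar> < \<epsilon>"
    using K.dense_H[OF Phi(1) finC CA e uT faith] by blast
  define \<psi> where "\<psi> = toK \<Psi>"
  have "\<psi> \<in> Kchar P" unfolding \<psi>_def by (rule toK_Kchar[OF Psi(1)])
  moreover have "\<psi> (1, t) > 0" unfolding \<psi>_def toK_def using bd_1t[OF t] Psi(2) u_def by simp
  moreover have "\<bar>\<psi> x - \<phi> x\<bar> < \<epsilon>" if x: "x \<in> F" for x
  proof (cases "x \<in> bdloc P")
    case True
    then have "frc x \<in> C" unfolding C_def using x by blast
    then show ?thesis unfolding \<psi>_def toK_def using True Psi(3) Phi(2) by simp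
  next
    case False
    then show ?thesis unfolding \<psi>_def toK_def using Kchar_props(6)[OF phi False] e by simp
  qed
  ultimately show ?thesis by blast
qed

end


context Rset
begin

abbreviation "X \<equiv> Ktop P"

lemma topspace_X: "topspace X = Kchar P"
  unfolding Ktop_def by simp

lemma eval_cont: "continuous_map X euclideanreal (\<lambda>\<phi>. \<phi> x)"
  unfolding Ktop_def
  by (rule continuous_map_from_subtopology[OF continuous_map_product_projection]) simp

lemma Oinf_sub: "Oinf P t \<subseteq> topspace X"
  unfolding Oinf_def topspace_X by blast

lemma Oinf_eq: "Oinf P t = {\<phi> \<in> topspace X. \<phi> (1, t) \<in> {0<..}}"
  unfolding Oinf_def topspace_X by auto

lemma Oinf_open: "openin X (Oinf P t)"
  unfolding Oinf_eq by (rule openin_continuous_map_preimage[OF eval_cont]) simp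

lemma open_nbhd:
  assumes G: "openin X G" and phi: "\<phi> \<in> G"
  shows "\<exists>F \<epsilon>. finite F \<and> \<epsilon> > 0 \<and> (\<forall>\<psi>\<in>Kchar P. (\<forall>x\<in>F. \<bar>\<psi> x - \<phi> x\<bar> < \<epsilon>) \<longrightarrow> \<psi> \<in> G)"
proof -
  obtain S where S: "openin (powertop_real UNIV) S" "G = S \<inter> Kchar P"
    using G unfolding Ktop_def openin_subtopology by blast
  have "\<phi> \<in> S" using S phi by blast
  then obtain U where U: "finite {i \<in> UNIV. U i \<noteq> topspace euclideanreal}"
      "\<forall>i\<in>UNIV. openin euclideanreal (U i)" "\<phi> \<in> Pi\<^sub>E UNIV U" "Pi\<^sub>E UNIV U \<subseteq> S"
    using S(1) unfolding openin_product_topology_alt by blast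
  define F where "F = {i. U i \<noteq> UNIV}"
  have finF: "finite F" using U(1) by (simp add: F_def)
  have "\<forall>i\<in>F. \<exists>e>0. \<forall>y. \<bar>y - \<phi> i\<bar> < e \<longrightarrow> y \<in> U i"
  proof
    fix i assume "i \<in> F"
    have "openin euclideanreal (U i)" using U(2) by blast
    then have "open (U i)" by simp
    moreover have "\<phi> i \<in> U i" using PiE_mem[OF U(3), of i] by blast
    ultimately obtain e where "e > 0" "\<forall>y. dist y (\<phi> i) < e \<longrightarrow> y \<in> U i"
      unfolding open_dist by blast
    then show "\<exists>e>0. \<forall>y. \<bar>y - \<phi> i\<bar> < e \<longrightarrow> y \<in> U i" by (auto simp: dist_real_def)
  qed
  then obtain E where E: "\<forall>i\<in>F. E i > 0 \<and> (\<forall>y. \<bar>y - \<phi> i\<bar> < E i \<longrightarrow> y \<in> U i)" by metis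
  define \<epsilon> where "\<epsilon> = Min (insert 1 (E ` F))"
  have fin2: "finite (insert 1 (E ` F))" using finF by simp
  have epos: "\<epsilon> > 0" unfolding \<epsilon>_def using fin2 E by (subst Min_gr_iff) auto
  have ele: "\<epsilon> \<le> E i" if "i \<in> F" for i unfolding \<epsilon>_def using fin2 that by (intro Min_le) auto
  have "\<psi> \<in> G" if psi: "\<psi> \<in> Kchar P" "\<forall>x\<in>F. \<bar>\<psi> x - \<phi> x\<bar> < \<epsilon>" for \<psi>
  proof -
    have "\<psi> i \<in> U i" for i
    proof (cases "i \<in> F")
      case True
      then have "\<bar>\<psi> i - \<phi> i\<bar> < E i" using psi(2) ele[OF True] by fastforce
      then show ?thesis using E True by blast
    next
      case False
      then show ?thesis by (simp add: F_def)
    qed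
    then have "\<psi> \<in> Pi\<^sub>E UNIV U" by (simp add: PiE_iff)
    then show ?thesis using U(4) S(2) psi(1) by blast
  qed
  then show ?thesis using finF epos by blast
qed

lemma Oinf_dense: assumes t: "t \<in> Loc P" shows "X closure_of (Oinf P t) = topspace X"
  unfolding dense_intersects_open
proof (intro allI impI)
  fix G assume G: "openin X G \<and> G \<noteq> {}"
  then obtain \<phi> where phi: "\<phi> \<in> G" by blast
  have phiK: "\<phi> \<in> Kchar P" using phi G openin_subset topspace_X by blast
  obtain F \<epsilon> where F: "finite F" "\<epsilon> > 0" "\<forall>\<psi>\<in>Kchar P. (\<forall>x\<in>F. \<bar>\<psi> x - \<phi> x\<bar> < \<epsilon>) \<longrightarrow> \<psi> \<in> G"
    using open_nbhd[OF conjunct1[OF G] phi] by blast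
  obtain \<psi> where psi: "\<psi> \<in> Kchar P" "\<psi> (1, t) > 0" "\<forall>x\<in>F. \<bar>\<psi> x - \<phi> x\<bar> < \<epsilon>"
    using K_dense[OF t phiK F(1) F(2)] by blast
  have "\<psi> \<in> G" using F(3) psi by blast
  moreover have "\<psi> \<in> Oinf P t" unfolding Oinf_def using psi by blast
  ultimately show "Oinf P t \<inter> G \<noteq> {}" by blast
qed

lemma Kpos_1s: assumes "\<phi> \<in> Kchar P" "s \<in> Loc P" shows "\<phi> (1, s) \<ge> 0"
  using Kchar_props(5)[OF assms(1) bd_1t[OF assms(2)]] P_1 unfolding frac_le_def by simp

lemma K_ss: assumes "\<phi> \<in> Kchar P" "s \<in> Loc P" shows "\<phi> (s, s) = 1"
proof -
  have "frac_eq (s, s) (1, 1)" unfolding frac_eq_def by simp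
  then have "\<phi> (s, s) = \<phi> (1, 1)" using Kchar_props(1)[OF assms(1) bd_tt[OF assms(2)] bd_1] by blast
  then show ?thesis using Kchar_props(2)[OF assms(1)] by simp
qed

lemma K_1t: assumes "\<phi> \<in> Kchar P" "s \<in> Loc P" "(s, t) \<in> bdloc P"
  shows "\<phi> (1, t) = \<phi> (s, t) * \<phi> (1, s)"
proof -
  have t: "t \<in> Loc P" using bd_Loc[OF assms(3)] by simp
  have "frac_eq (frac_mult (s, t) (1, s)) (1, t)" unfolding frac_eq_def frac_mult_def by (simp add: ac_simps)
  then have "\<phi> (frac_mult (s, t) (1, s)) = \<phi> (1, t)"
    using Kchar_props(1)[OF assms(1) bd_mult[OF assms(3) bd_1t[OF assms(2)]] bd_1t[OF t]] by blast
  moreover have "\<phi> (frac_mult (s, t) (1, s)) = \<phi> (s, t) * \<phi> (1, s)"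
    using Kchar_props(4)[OF assms(1) assms(3) bd_1t[OF assms(2)]] .
  ultimately show ?thesis by simp
qed

lemma Oinf_mono: assumes "s \<in> Loc P" "(s, t) \<in> bdloc P" shows "Oinf P t \<subseteq> Oinf P s"
proof
  fix \<phi> assume "\<phi> \<in> Oinf P t"
  then have phi: "\<phi> \<in> Kchar P" "\<phi> (1, t) > 0" unfolding Oinf_def by auto
  have "\<phi> (1, s) \<noteq> 0" using K_1t[OF phi(1) assms] phi(2) by auto
  then have "\<phi> (1, s) > 0" using Kpos_1s[OF phi(1) assms(1)] by simp
  then show "\<phi> \<in> Oinf P s" unfolding Oinf_def using phi by blast
qed

lemma rt_ss: assumes "\<phi> \<in> Kchar P" "s \<in> Loc P" shows "rt s s \<phi> = inverse (\<phi> (1, s))"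
  unfolding rt_def using K_ss[OF assms] by simp

lemma rt_st: assumes "\<phi> \<in> Oinf P t" "s \<in> Loc P" "(s, t) \<in> bdloc P" shows "rt s t \<phi> = rt s s \<phi>"
proof -
  have phi: "\<phi> \<in> Kchar P" "\<phi> (1, t) > 0" using assms(1) unfolding Oinf_def by auto
  have e: "\<phi> (1, t) = \<phi> (s, t) * \<phi> (1, s)" by (rule K_1t[OF phi(1) assms(2,3)])
  have "\<phi> (s, t) \<noteq> 0" using e phi(2) by auto
  then have "rt s t \<phi> = inverse (\<phi> (1, s))" unfolding rt_def e by (simp add: field_simps)
  then show ?thesis using rt_ss[OF phi(1) assms(2)] by simp
qed

lemma rt_ss_cont: assumes "s \<in> Loc P" shows "continuous_map (subtopology X (Oinf P s)) euclideanreal (rt s s)"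
proof -
  have "continuous_map (subtopology X (Oinf P s)) euclideanreal (\<lambda>\<phi>. inverse (\<phi> (1, s)) * \<phi> (s, s))"
  proof (intro continuous_map_real_mult continuous_map_real_inverse)
    show "continuous_map (subtopology X (Oinf P s)) euclideanreal (\<lambda>\<phi>. \<phi> (1, s))"
      by (rule continuous_map_from_subtopology[OF eval_cont])
    show "continuous_map (subtopology X (Oinf P s)) euclideanreal (\<lambda>\<phi>. \<phi> (s, s))"
      by (rule continuous_map_from_subtopology[OF eval_cont])
    show "\<phi> (1, s) \<noteq> 0" if "\<phi> \<in> topspace (subtopology X (Oinf P s))" for \<phi>
      using that unfolding Oinf_def by auto
  qed
  then show ?thesis unfolding rt_def .
qed

end


context Rset
begin

lemma maximality:
  assumes s: "s \<in> Loc P" and st: "(s, t) \<in> bdloc P"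
    and rep: "ae_rep X (V, g)" and eq: "ae_eq X (V, g) (Oinf P t, rt s t)"
  shows "V \<subseteq> Oinf P s \<and> (\<forall>x\<in>V. rt s s x = g x)"
proof -
  have t: "t \<in> Loc P" using bd_Loc[OF st] by simp
  have Vo: "openin X V" and gc: "continuous_map (subtopology X V) euclideanreal g"
    using rep unfolding ae_rep_def fst_conv snd_conv by blast+
  obtain W where W: "openin X W" "W \<subseteq> V \<inter> Oinf P t"
      "(subtopology X (V \<inter> Oinf P t)) closure_of W = V \<inter> Oinf P t" "\<forall>x\<in>W. g x = rt s t x"
    using eq unfolding ae_eq_def fst_conv snd_conv by blast
  have meet: "G \<inter> W \<noteq> {}" if G: "openin X G" "G \<inter> V \<noteq> {}" for G
  proof -
    have GV: "openin X (G \<inter> V)" by (rule openin_Int[OF G(1) Vo])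
    have "\<forall>T. openin X T \<and> T \<noteq> {} \<longrightarrow> Oinf P t \<inter> T \<noteq> {}"
      using Oinf_dense[OF t] unfolding dense_intersects_open .
    then have "Oinf P t \<inter> (G \<inter> V) \<noteq> {}" using GV G(2) by blast
    then obtain \<psi> where psi: "\<psi> \<in> G" "\<psi> \<in> V" "\<psi> \<in> Oinf P t" by blast
    have cl: "\<psi> \<in> (subtopology X (V \<inter> Oinf P t)) closure_of W" using W(3) psi by blast
    have op: "openin (subtopology X (V \<inter> Oinf P t)) (G \<inter> (V \<inter> Oinf P t))"
      by (rule openin_subtopology_Int[OF G(1)])
    have all: "\<forall>T. \<psi> \<in> T \<and> openin (subtopology X (V \<inter> Oinf P t)) T \<longrightarrow> (\<exists>y. y \<in> W \<and> y \<in> T)"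
      using cl unfolding in_closure_of by (rule conjunct2)
    have pin: "\<psi> \<in> G \<inter> (V \<inter> Oinf P t)" using psi by blast
    have "\<exists>y. y \<in> W \<and> y \<in> G \<inter> (V \<inter> Oinf P t)" using all[rule_format, OF conjI[OF pin op]] .
    then show ?thesis by blast
  qed
  have WO: "W \<subseteq> Oinf P s" using W(2) Oinf_mono[OF s st] by blast
  have gW: "g x = inverse (x (1, s))" if "x \<in> W" for x
  proof -
    have "x \<in> Oinf P t" "x \<in> Kchar P" using W(2) that unfolding Oinf_def by auto
    then show ?thesis using W(4) that rt_st[OF _ s st] rt_ss[OF _ s] by simp
  qed
  have VK: "V \<subseteq> Kchar P" using openin_subset[OF Vo] topspace_X by simp
  have VO: "V \<subseteq> Oinf P s"
  proof
    fix \<phi> assume phiV: "\<phi> \<in> V"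
    have phiK: "\<phi> \<in> Kchar P" using VK phiV by blast
    show "\<phi> \<in> Oinf P s"
    proof (rule ccontr)
      assume "\<phi> \<notin> Oinf P s"
      then have z: "\<phi> (1, s) = 0" using Kpos_1s[OF phiK s] phiK unfolding Oinf_def by auto
      define G1 where "G1 = {\<psi> \<in> topspace (subtopology X V). g \<psi> \<in> ball (g \<phi>) 1}"
      have "openin (subtopology X V) G1" unfolding G1_def by (rule openin_continuous_map_preimage[OF gc]) simp
      then have G1o: "openin X G1" using Vo openin_trans_full by blast
      define c where "c = \<bar>g \<phi>\<bar> + 2"
      have c: "c > 0" by (simp add: c_def)
      define G2 where "G2 = {\<psi> \<in> topspace X. \<psi> (1, s) \<in> {..< 1 / c}}"
      have G2o: "openin X G2" unfolding G2_def by (rule openin_continuous_map_preimage[OF eval_cont]) simp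
      have "\<phi> \<in> G1 \<inter> G2" unfolding G1_def G2_def using phiV phiK z c topspace_X by simp
      then have "(G1 \<inter> G2) \<inter> W \<noteq> {}" using meet[of "G1 \<inter> G2"] G1o G2o phiV by blast
      then obtain \<psi> where psi: "\<psi> \<in> G1" "\<psi> \<in> G2" "\<psi> \<in> W" by blast
      have p0: "\<psi> (1, s) > 0" using WO psi(3) unfolding Oinf_def by auto
      have p1: "\<psi> (1, s) < 1 / c" using psi(2) unfolding G2_def by simp
      have "inverse (\<psi> (1, s)) > c"
      proof -
        have "c * \<psi> (1, s) < 1" using p1 c by (simp add: field_simps)
        then show ?thesis using p0 by (simp add: field_simps)
      qed
      then have "g \<psi> > c" using gW[OF psi(3)] by simp
      moreover have "dist (g \<phi>) (g \<psi>) < 1" using psi(1) unfolding G1_def by simp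
      ultimately show False unfolding c_def dist_real_def by linarith
    qed
  qed
  have agree: "rt s s \<phi> = g \<phi>" if phiV: "\<phi> \<in> V" for \<phi>
  proof (rule ccontr)
    assume ne: "rt s s \<phi> \<noteq> g \<phi>"
    have hc: "continuous_map (subtopology X V) euclideanreal (\<lambda>\<psi>. g \<psi> - rt s s \<psi>)"
      by (intro continuous_map_diff gc continuous_map_from_subtopology_mono[OF rt_ss_cont[OF s] VO])
    define G where "G = {\<psi> \<in> topspace (subtopology X V). g \<psi> - rt s s \<psi> \<in> - {0}}"
    have "openin (subtopology X V) G" unfolding G_def by (rule openin_continuous_map_preimage[OF hc]) (simp add: open_Compl)
    then have Go: "openin X G" using Vo openin_trans_full by blast
    have "\<phi> \<in> G" unfolding G_def using phiV ne VK topspace_X by auto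
    then have "G \<inter> W \<noteq> {}" using meet[OF Go] phiV by blast
    then obtain \<psi> where psi: "\<psi> \<in> G" "\<psi> \<in> W" by blast
    have "\<psi> \<in> Kchar P" using psi(2) W(2) unfolding Oinf_def by auto
    then have "g \<psi> = rt s s \<psi>" using gW[OF psi(2)] rt_ss[OF _ s] by simp
    then show False using psi(1) unfolding G_def by simp
  qed
  show ?thesis using VO agree by blast
qed

theorem main:
  assumes s: "s \<in> Loc P"
  shows "Oinf P s = ae_max_dom X (hat_rep P s)"
proof -
  define t where "t = (SOME t. t \<in> Loc P \<and> (s, t) \<in> bdloc P)"
  have ex: "\<exists>t. t \<in> Loc P \<and> (s, t) \<in> bdloc P" using s bd_tt[OF s] by blast
  have t: "t \<in> Loc P" "(s, t) \<in> bdloc P" using someI_ex[OF ex] unfolding t_def by blast+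
  have hat: "hat_rep P s = (Oinf P t, rt s t)" unfolding hat_rep_def t_def Let_def by simp
  have tsub: "Oinf P t \<subseteq> Oinf P s" by (rule Oinf_mono[OF s t(2)])
  have rep: "ae_rep X (Oinf P s, rt s s)"
    unfolding ae_rep_def using Oinf_open Oinf_dense[OF s] rt_ss_cont[OF s] by simp
  have eqv: "ae_eq X (Oinf P s, rt s s) (Oinf P t, rt s t)"
    unfolding ae_eq_def fst_conv snd_conv
  proof (intro exI[of _ "Oinf P t"] conjI ballI)
    show "openin X (Oinf P t)" by (rule Oinf_open)
    show "Oinf P t \<subseteq> Oinf P s \<inter> Oinf P t" using tsub by blast
    have i: "Oinf P s \<inter> Oinf P t = Oinf P t" using tsub by blast
    have "topspace (subtopology X (Oinf P t)) = Oinf P t" using Oinf_sub by auto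
    then show "subtopology X (Oinf P s \<inter> Oinf P t) closure_of Oinf P t = Oinf P s \<inter> Oinf P t"
      unfolding i by (metis closure_of_topspace)
    fix x assume "x \<in> Oinf P t"
    then show "rt s s x = rt s t x" using rt_st[OF _ s t(2)] by simp
  qed
  have "(THE U. \<exists>f. ae_rep X (U, f) \<and> ae_eq X (U, f) (hat_rep P s) \<and>
     (\<forall>V g. ae_rep X (V, g) \<and> ae_eq X (V, g) (hat_rep P s) \<longrightarrow> V \<subseteq> U \<and> (\<forall>x\<in>V. f x = g x))) = Oinf P s"
  proof (rule the_equality)
    show "\<exists>f. ae_rep X (Oinf P s, f) \<and> ae_eq X (Oinf P s, f) (hat_rep P s) \<and>
     (\<forall>V g. ae_rep X (V, g) \<and> ae_eq X (V, g) (hat_rep P s) \<longrightarrow> V \<subseteq> Oinf P s \<and> (\<forall>x\<in>V. f x = g x))"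
      unfolding hat using rep eqv maximality[OF s t(2)] by blast
  next
    fix U assume "\<exists>f. ae_rep X (U, f) \<and> ae_eq X (U, f) (hat_rep P s) \<and>
     (\<forall>V g. ae_rep X (V, g) \<and> ae_eq X (V, g) (hat_rep P s) \<longrightarrow> V \<subseteq> U \<and> (\<forall>x\<in>V. f x = g x))"
    then obtain f where f: "ae_rep X (U, f)" "ae_eq X (U, f) (Oinf P t, rt s t)"
      "\<forall>V g. ae_rep X (V, g) \<and> ae_eq X (V, g) (Oinf P t, rt s t) \<longrightarrow> V \<subseteq> U \<and> (\<forall>x\<in>V. f x = g x)"
      unfolding hat by blast
    have "Oinf P s \<subseteq> U" using f(3) rep eqv by blast
    moreover have "U \<subseteq> Oinf P s" using maximality[OF s t(2) f(1) f(2)] by blast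
    ultimately show "U = Oinf P s" by blast
  qed
  then show ?thesis unfolding ae_max_dom_def by simp
qed

end

theorem lemma34:
  fixes P :: "'a::comm_ring_1 set" and s :: 'a
  assumes "po_cring P" and "archimedean_cone P" and "localizable P" and "s \<in> Loc P"
  shows "Oinf P s = ae_max_dom (Ktop P) (hat_rep P s)"
proof -
  interpret Rset P using assms(1-3) by unfold_locales
  show ?thesis using main[OF assms(4)] .
qed


end
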